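(* Let $0\le s<n$ and let $\rho$ be a $1$-contact $(n-s)$-horizontal $(n-s+1)$-form on $W^1\subseteq J^1Y$, with $$p_1\rho=\big(A^{i_1\dots i_s}_\sigma\omega^\sigma+A^{i_1\dots i_sj}_\sigma\omega^\sigma_j\big)\wedge ds_{i_1\dots i_s},$$ coefficients antisymmetric in $i_1\dots i_s$. Let $\mathbb{V}_\rho$ be the variational morphism $\langle\mathbb{V}_\rho|J^1\Xi\rangle=J^1\Xi\lrcorner\,p_1\rho=(A^{i_1\dots i_s}_\sigma\Xi^\sigma+A^{i_1\dots i_sj}_\sigma\Xi^\sigma_j)\,ds_{i_1\dots i_s}$, and let $(\mathbb{E},\mathbb{T})$ be its canonical splitting with respect to the fibered connection whose coefficients vanish on the chart, i.e. the variational morphisms $\mathbb{E}$ of rank $1$ and degree $n-s$, reduced, and $\mathbb{T}$ of rank $0$ and degree $n-s-1$, such that $\langle\mathbb{V}_\rho|J^1\Xi\rangle=\langle\mathbb{E}|J^1\Xi\rangle+\mathrm{Div}(\langle\mathbb{T}|\Xi\rangle)$ for all $\pi$-vertical $\Xi$. Define $\hat t^{i_1\dots i_si}_\sigma=A^{[i_1\dots i_si]}_\sigma$ and the variational morphisms $$\langle\mathbb{T}'|\Xi\rangle=\frac{1}{s+1}\,\hat t^{i_1\dots i_si}_\sigma\Xi^\sigma\,ds_{i_1\dots i_si},$$ $$\langle\mathbb{E}'|J^1\Xi\rangle=\Big[\big(A^{i_1\dots i_s}_\sigma-d_i\hat t^{i_1\dots i_si}_\sigma\big)\Xi^\sigma+\big(A^{i_1\dots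 i_sj}_\sigma-\hat t^{i_1\dots i_sj}_\sigma\big)\Xi^\sigma_j\Big]ds_{i_1\dots i_s}.$$ Then $\langle\mathbb{V}_\rho|J^1\Xi\rangle=\langle\mathbb{E}'|J^1\Xi\rangle+\mathrm{Div}(\langle\mathbb{T}'|\Xi\rangle)$ and the two splittings coincide: $\mathbb{E}'=\mathbb{E}$ and $\mathbb{T}'=\mathbb{T}$.
   Context: Let $\pi:Y\to X$ be a fibered manifold, $n=\dim X$. Let $U\subseteq X$ be open and $W=\pi^{-1}(U)$ the domain of a fibered chart $(x^i,y^\sigma)$ with associated coordinates $(x^i,y^\sigma,y^\sigma_j)$ on $W^1\subseteq J^1Y$ and $(x^i,y^\sigma_J)$ on higher jets; repeated indices are summed over $1,\dots,n$. Square brackets denote antisymmetrization (weight $1/(\text{number of indices})!$). Contact forms $\omega^\sigma=dy^\sigma-y^\sigma_idx^i$, $\omega^\sigma_j=dy^\sigma_j-y^\sigma_{ji}dx^i$. $ds=dx^1\wedge\dots\wedge dx^n$, $ds_{i_1\dots i_p}=\frac{\partial}{\partial x^{i_p}}\lrcorner\dots\lrcorner\frac{\partial}{\partial x^{i_1}}\lrcorner ds$. Formal derivative $d_i=\frac{\partial}{\partial x^i}+\sum_J y^\sigma_{Ji}\frac{\partial}{\partial y^\sigma_J}$. $p_1$ denotes the $1$-contact component (pull back to $J^2Y$, substitute $dy^\sigma_J=\omega^\sigma_J+y^\sigma_{Ji}dx^i$, keep terms with exactly one $\omega$). For a $\pi$-vertical vector field $\Xi=\Xi^\sigma\partial/\partial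 y^\sigma$, $J^1\Xi=\Xi^\sigma\partial/\partial y^\sigma+\Xi^\sigma_j\partial/\partial y^\sigma_j$ with $\Xi^\sigma_j=d_j\Xi^\sigma$. A variational morphism of rank $r$ and degree $n-s$ assigns to each such $\Xi$ the horizontal form $\frac{1}{s!}\big(\sum_{|J|\le r}v^{i_1\dots i_sJ}_\sigma\Xi^\sigma_J\big)ds_{i_1\dots i_s}$ (coefficients antisymmetric in $i_1\dots i_s$, symmetric in $J$); it is reduced (with respect to the fibered connection with vanishing coefficients) if each of its terms of rank $h\ge1$ satisfies $v^{[i_1\dots i_sj_1]j_2\dots j_h}_\sigma=0$. For a horizontal form $\beta=f^{i_1\dots i_p}ds_{i_1\dots i_p}$ depending on $x$, jets of $y$ and of $\Xi$, $\mathrm{Div}(\beta)=d_lf^{i_1\dots i_p}\,dx^l\wedge ds_{i_1\dots i_p}$, with $d_l$ acting also on $\Xi$-variables by $d_l\Xi^\sigma_J=\Xi^\sigma_{Jl}$. For $r=1$ the pair $(\mathbb{E},\mathbb{T})$ described in the claim is uniquely determined by these conditions. *)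

theory Defs
  imports "HOL-Analysis.Analysis" "HOL-Combinatorics.Permutations" "HOL-Library.Multiset"
begin

fun Ck_on :: "nat \<Rightarrow> 'a::real_normed_vector set \<Rightarrow> ('a \<Rightarrow> real) \<Rightarrow> bool" where
  "Ck_on 0 S f = continuous_on S f"
| "Ck_on (Suc k) S f =
     ((\<forall>x\<in>S. f differentiable (at x)) \<and>
      (\<forall>v. Ck_on k S (\<lambda>x. frechet_derivative f (at x) v)))"

definition smooth_fun_on :: "'a::real_normed_vector set \<Rightarrow> ('a \<Rightarrow> real) \<Rightarrow> bool" where
  "smooth_fun_on S f \<longleftrightarrow> (\<forall>k. Ck_on k S f)"

text \<open>Base indices are the elements of a finite linearly ordered type 'n (n = CARD('n)),
  fibre indices the elements of a finite type 'm.  A point of the (infinite) jet prolongation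
  of the chart domain is a pair (x, u) with x the base coordinates and u J the fibre
  coordinates y_J (J a multiset of base indices, i.e. a symmetric multi-index; u {#} = y).\<close>

type_synonym ('n, 'm) jpt = "(real^'n) \<times> ('n multiset \<Rightarrow> real^'m)"

definition jdom :: "((real^'n::{finite,linorder}) \<times> (real^'m::finite)) set \<Rightarrow> ('n::{finite,linorder},'m::finite) jpt set" where
  "jdom W = {P. (fst P, snd P {#}) \<in> W}"

text \<open>First jet domain W^1, as a subset of R^n x R^m x R^(m n) (p $ sigma $ j = y^sigma_j).\<close>
definition j1dom :: "((real^'n::{finite,linorder}) \<times> (real^'m::finite)) set \<Rightarrow> ((real^'n::{finite,linorder}) \<times> (real^'m::finite) \<times> (real^'n::{finite,linorder}^'m::finite)) set" where
  "j1dom W = {(x, y, p). (x, y) \<in> W}"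

definition j1proj :: "('n::{finite,linorder},'m::finite) jpt \<Rightarrow> (real^'n::{finite,linorder}) \<times> (real^'m::finite) \<times> (real^'n::{finite,linorder}^'m::finite)" where
  "j1proj P = (fst P, snd P {#}, \<chi> \<sigma> j. snd P {#j#} $ \<sigma>)"

definition has_order :: "nat \<Rightarrow> (('n::{finite,linorder},'m::finite) jpt \<Rightarrow> real) \<Rightarrow> bool" where
  "has_order k F \<longleftrightarrow> (\<forall>P Q. fst P = fst Q \<and> (\<forall>J. size J \<le> k \<longrightarrow> snd P J = snd Q J)
                        \<longrightarrow> F P = F Q)"

definition ford :: "(('n::{finite,linorder},'m::finite) jpt \<Rightarrow> real) \<Rightarrow> nat" where
  "ford F = (LEAST k. has_order k F)"

definition upd_x :: "'n::{finite,linorder} \<Rightarrow> real \<Rightarrow> ('n::{finite,linorder},'m::finite) jpt \<Rightarrow> ('n::{finite,linorder},'m::finite) jpt" where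
  "upd_x i t P = ((\<chi> j. if j = i then t else fst P $ j), snd P)"

definition upd_y :: "'m::finite \<Rightarrow> 'n::{finite,linorder} multiset \<Rightarrow> real \<Rightarrow> ('n::{finite,linorder},'m::finite) jpt \<Rightarrow> ('n::{finite,linorder},'m::finite) jpt" where
  "upd_y \<sigma> J t P = (fst P, (snd P)(J := (\<chi> \<nu>. if \<nu> = \<sigma> then t else snd P J $ \<nu>)))"

definition pdx :: "'n::{finite,linorder} \<Rightarrow> (('n::{finite,linorder},'m::finite) jpt \<Rightarrow> real) \<Rightarrow> ('n::{finite,linorder},'m::finite) jpt \<Rightarrow> real" where
  "pdx i F P = deriv (\<lambda>t. F (upd_x i t P)) (fst P $ i)"

definition pdy :: "'m::finite \<Rightarrow> 'n::{finite,linorder} multiset \<Rightarrow> (('n::{finite,linorder},'m::finite) jpt \<Rightarrow> real) \<Rightarrow> ('n::{finite,linorder},'m::finite) jpt \<Rightarrow> real" where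
  "pdy \<sigma> J F P = deriv (\<lambda>t. F (upd_y \<sigma> J t P)) (snd P J $ \<sigma>)"

definition pdiff_on :: "('n::{finite,linorder},'m::finite) jpt set \<Rightarrow> (('n::{finite,linorder},'m::finite) jpt \<Rightarrow> real) \<Rightarrow> bool" where
  "pdiff_on S F \<longleftrightarrow> (\<forall>P\<in>S.
      (\<forall>i. (\<lambda>t. F (upd_x i t P)) differentiable (at (fst P $ i))) \<and>
      (\<forall>\<sigma> J. (\<lambda>t. F (upd_y \<sigma> J t P)) differentiable (at (snd P J $ \<sigma>))))"

definition fd :: "'n::{finite,linorder} \<Rightarrow> (('n::{finite,linorder},'m::finite) jpt \<Rightarrow> real) \<Rightarrow> ('n::{finite,linorder},'m::finite) jpt \<Rightarrow> real" where
  "fd i F P = pdx i F P +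
     (\<Sum>J\<in>{J::'n::{finite,linorder} multiset. size J \<le> ford F}. \<Sum>\<sigma>\<in>UNIV. snd P (J + {#i#}) $ \<sigma> * pdy \<sigma> J F P)"

text \<open>A horizontal form at a point is given by its components on lists of coordinate
  vectors d/dx^(j_1), ..., d/dx^(j_k) (a function 'n list => real).\<close>

definition inversions :: "'a::linorder list \<Rightarrow> nat" where
  "inversions js = card {(a, b). a < b \<and> b < length js \<and> js ! b < js ! a}"

text \<open>Components of ds = dx^1 /\ ... /\ dx^n.\<close>
definition ds_form :: "'n::{finite,linorder} list \<Rightarrow> real" where
  "ds_form js = (if distinct js \<and> length js = CARD('n) then (-1) ^ inversions js else 0)"

text \<open>ds_(i_1...i_p) = d/dx^(i_p) _| ... d/dx^(i_1) _| ds (interior product in the first slot).\<close>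
definition ds_idx :: "'n::{finite,linorder} list \<Rightarrow> 'n::{finite,linorder} list \<Rightarrow> real" where
  "ds_idx is js = ds_form (is @ js)"

definition wedge_dx :: "'n::{finite,linorder} \<Rightarrow> ('n::{finite,linorder} list \<Rightarrow> real) \<Rightarrow> 'n::{finite,linorder} list \<Rightarrow> real" where
  "wedge_dx l \<beta> js = (\<Sum>a<length js. (-1) ^ a * (if js ! a = l then \<beta> (take a js @ drop (Suc a) js) else 0))"

text \<open>Horizontal form f^(i_1...i_p) ds_(i_1...i_p) (summation over all index lists).\<close>
definition hform :: "nat \<Rightarrow> ('n::{finite,linorder} list \<Rightarrow> ('n::{finite,linorder},'m::finite) jpt \<Rightarrow> real) \<Rightarrow> ('n::{finite,linorder},'m::finite) jpt \<Rightarrow> 'n::{finite,linorder} list \<Rightarrow> real" where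
  "hform p f P js = (\<Sum>I\<in>{I::'n::{finite,linorder} list. length I = p}. f I P * ds_idx I js)"

definition Div :: "nat \<Rightarrow> ('n::{finite,linorder} list \<Rightarrow> ('n::{finite,linorder},'m::finite) jpt \<Rightarrow> real) \<Rightarrow> ('n::{finite,linorder},'m::finite) jpt \<Rightarrow> 'n::{finite,linorder} list \<Rightarrow> real" where
  "Div p f P js = (\<Sum>I\<in>{I::'n::{finite,linorder} list. length I = p}. \<Sum>l\<in>UNIV. fd l (f I) P * wedge_dx l (ds_idx I) js)"

definition antisym_idx :: "nat \<Rightarrow> ('a list \<Rightarrow> real) \<Rightarrow> bool" where
  "antisym_idx p c \<longleftrightarrow> (\<forall>is a b. length is = p \<and> a < b \<and> b < p \<longrightarrow> c (is[a := is ! b, b := is ! a]) = - c is)"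

definition alt :: "('a list \<Rightarrow> real) \<Rightarrow> 'a list \<Rightarrow> real" where
  "alt c ks = (1 / fact (length ks)) *
     (\<Sum>\<pi>\<in>{\<pi>. \<pi> permutes {..<length ks}}. of_int (sign \<pi>) * c (map (\<lambda>k. ks ! \<pi> k) [0..<length ks]))"

definition Xi0 :: "((real^'n::{finite,linorder}) \<times> (real^'m::finite) \<Rightarrow> real^'m::finite) \<Rightarrow> 'm::finite \<Rightarrow> ('n::{finite,linorder},'m::finite) jpt \<Rightarrow> real" where
  "Xi0 Xi \<sigma> P = Xi (fst P, snd P {#}) $ \<sigma>"

definition Xi1 :: "((real^'n::{finite,linorder}) \<times> (real^'m::finite) \<Rightarrow> real^'m::finite) \<Rightarrow> 'm::finite \<Rightarrow> 'n::{finite,linorder} \<Rightarrow> ('n::{finite,linorder},'m::finite) jpt \<Rightarrow> real" where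
  "Xi1 Xi \<sigma> j P = fd j (Xi0 Xi \<sigma>) P"

definition vert_field :: "((real^'n::{finite,linorder}) \<times> (real^'m::finite)) set \<Rightarrow> ((real^'n::{finite,linorder}) \<times> (real^'m::finite) \<Rightarrow> real^'m::finite) \<Rightarrow> bool" where
  "vert_field W Xi \<longleftrightarrow> (\<forall>\<sigma>. smooth_fun_on W (\<lambda>z. Xi z $ \<sigma>))"

definition vm1 :: "nat \<Rightarrow> ('n::{finite,linorder} list \<Rightarrow> 'm::finite \<Rightarrow> ('n::{finite,linorder},'m::finite) jpt \<Rightarrow> real)
     \<Rightarrow> ('n::{finite,linorder} list \<Rightarrow> 'n::{finite,linorder} \<Rightarrow> 'm::finite \<Rightarrow> ('n::{finite,linorder},'m::finite) jpt \<Rightarrow> real)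
     \<Rightarrow> ((real^'n::{finite,linorder}) \<times> (real^'m::finite) \<Rightarrow> real^'m::finite) \<Rightarrow> ('n::{finite,linorder},'m::finite) jpt \<Rightarrow> 'n::{finite,linorder} list \<Rightarrow> real" where
  "vm1 s v0 v1 Xi = hform s (\<lambda>I P. (1 / fact s) *
      ((\<Sum>\<sigma>\<in>UNIV. v0 I \<sigma> P * Xi0 Xi \<sigma> P) + (\<Sum>\<sigma>\<in>UNIV. \<Sum>j\<in>UNIV. v1 I j \<sigma> P * Xi1 Xi \<sigma> j P)))"

definition vm0_coeff :: "nat \<Rightarrow> ('n::{finite,linorder} list \<Rightarrow> 'm::finite \<Rightarrow> ('n::{finite,linorder},'m::finite) jpt \<Rightarrow> real)
     \<Rightarrow> ((real^'n::{finite,linorder}) \<times> (real^'m::finite) \<Rightarrow> real^'m::finite) \<Rightarrow> 'n::{finite,linorder} list \<Rightarrow> ('n::{finite,linorder},'m::finite) jpt \<Rightarrow> real" where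
  "vm0_coeff s1 t Xi = (\<lambda>I P. (1 / fact s1) * (\<Sum>\<sigma>\<in>UNIV. t I \<sigma> P * Xi0 Xi \<sigma> P))"

definition vm0 :: "nat \<Rightarrow> ('n::{finite,linorder} list \<Rightarrow> 'm::finite \<Rightarrow> ('n::{finite,linorder},'m::finite) jpt \<Rightarrow> real)
     \<Rightarrow> ((real^'n::{finite,linorder}) \<times> (real^'m::finite) \<Rightarrow> real^'m::finite) \<Rightarrow> ('n::{finite,linorder},'m::finite) jpt \<Rightarrow> 'n::{finite,linorder} list \<Rightarrow> real" where
  "vm0 s1 t Xi = hform s1 (vm0_coeff s1 t Xi)"

definition reduced1 :: "('n::{finite,linorder},'m::finite) jpt set \<Rightarrow> nat \<Rightarrow> ('n::{finite,linorder} list \<Rightarrow> 'n::{finite,linorder} \<Rightarrow> 'm::finite \<Rightarrow> ('n::{finite,linorder},'m::finite) jpt \<Rightarrow> real) \<Rightarrow> bool" where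
  "reduced1 S s v1 \<longleftrightarrow> (\<forall>I j \<sigma>. \<forall>P\<in>S. length I = s \<longrightarrow>
       alt (\<lambda>ks. v1 (butlast ks) (last ks) \<sigma> P) (I @ [j]) = 0)"

definition liftA :: "((real^'n::{finite,linorder}) \<times> (real^'m::finite) \<times> (real^'n::{finite,linorder}^'m::finite) \<Rightarrow> real) \<Rightarrow> ('n::{finite,linorder},'m::finite) jpt \<Rightarrow> real" where
  "liftA f P = f (j1proj P)"

definition that :: "('n::{finite,linorder} list \<Rightarrow> 'n::{finite,linorder} \<Rightarrow> 'm::finite \<Rightarrow> (real^'n::{finite,linorder}) \<times> (real^'m::finite) \<times> (real^'n::{finite,linorder}^'m::finite) \<Rightarrow> real)
     \<Rightarrow> 'n::{finite,linorder} list \<Rightarrow> 'm::finite \<Rightarrow> ('n::{finite,linorder},'m::finite) jpt \<Rightarrow> real" where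
  "that A1 ks \<sigma> P = alt (\<lambda>ls. liftA (A1 (butlast ls) (last ls) \<sigma>) P) ks"

definition Vrho :: "nat \<Rightarrow> ('n::{finite,linorder} list \<Rightarrow> 'm::finite \<Rightarrow> (real^'n::{finite,linorder}) \<times> (real^'m::finite) \<times> (real^'n::{finite,linorder}^'m::finite) \<Rightarrow> real)
     \<Rightarrow> ('n::{finite,linorder} list \<Rightarrow> 'n::{finite,linorder} \<Rightarrow> 'm::finite \<Rightarrow> (real^'n::{finite,linorder}) \<times> (real^'m::finite) \<times> (real^'n::{finite,linorder}^'m::finite) \<Rightarrow> real)
     \<Rightarrow> ((real^'n::{finite,linorder}) \<times> (real^'m::finite) \<Rightarrow> real^'m::finite) \<Rightarrow> ('n::{finite,linorder},'m::finite) jpt \<Rightarrow> 'n::{finite,linorder} list \<Rightarrow> real" where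
  "Vrho s A0 A1 Xi = hform s (\<lambda>I P.
      (\<Sum>\<sigma>\<in>UNIV. liftA (A0 I \<sigma>) P * Xi0 Xi \<sigma> P) +
      (\<Sum>\<sigma>\<in>UNIV. \<Sum>j\<in>UNIV. liftA (A1 I j \<sigma>) P * Xi1 Xi \<sigma> j P))"

definition Tprime_coeff :: "nat \<Rightarrow> ('n::{finite,linorder} list \<Rightarrow> 'n::{finite,linorder} \<Rightarrow> 'm::finite \<Rightarrow> (real^'n::{finite,linorder}) \<times> (real^'m::finite) \<times> (real^'n::{finite,linorder}^'m::finite) \<Rightarrow> real)
     \<Rightarrow> ((real^'n::{finite,linorder}) \<times> (real^'m::finite) \<Rightarrow> real^'m::finite) \<Rightarrow> 'n::{finite,linorder} list \<Rightarrow> ('n::{finite,linorder},'m::finite) jpt \<Rightarrow> real" where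
  "Tprime_coeff s A1 Xi = (\<lambda>K P. (1 / (of_nat s + 1)) * (\<Sum>\<sigma>\<in>UNIV. that A1 K \<sigma> P * Xi0 Xi \<sigma> P))"

definition Tprime :: "nat \<Rightarrow> ('n::{finite,linorder} list \<Rightarrow> 'n::{finite,linorder} \<Rightarrow> 'm::finite \<Rightarrow> (real^'n::{finite,linorder}) \<times> (real^'m::finite) \<times> (real^'n::{finite,linorder}^'m::finite) \<Rightarrow> real)
     \<Rightarrow> ((real^'n::{finite,linorder}) \<times> (real^'m::finite) \<Rightarrow> real^'m::finite) \<Rightarrow> ('n::{finite,linorder},'m::finite) jpt \<Rightarrow> 'n::{finite,linorder} list \<Rightarrow> real" where
  "Tprime s A1 Xi = hform (Suc s) (Tprime_coeff s A1 Xi)"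

definition Eprime :: "nat \<Rightarrow> ('n::{finite,linorder} list \<Rightarrow> 'm::finite \<Rightarrow> (real^'n::{finite,linorder}) \<times> (real^'m::finite) \<times> (real^'n::{finite,linorder}^'m::finite) \<Rightarrow> real)
     \<Rightarrow> ('n::{finite,linorder} list \<Rightarrow> 'n::{finite,linorder} \<Rightarrow> 'm::finite \<Rightarrow> (real^'n::{finite,linorder}) \<times> (real^'m::finite) \<times> (real^'n::{finite,linorder}^'m::finite) \<Rightarrow> real)
     \<Rightarrow> ((real^'n::{finite,linorder}) \<times> (real^'m::finite) \<Rightarrow> real^'m::finite) \<Rightarrow> ('n::{finite,linorder},'m::finite) jpt \<Rightarrow> 'n::{finite,linorder} list \<Rightarrow> real" where
  "Eprime s A0 A1 Xi = hform s (\<lambda>I P.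
      (\<Sum>\<sigma>\<in>UNIV. (liftA (A0 I \<sigma>) P - (\<Sum>i\<in>UNIV. fd i (that A1 (I @ [i]) \<sigma>) P)) * Xi0 Xi \<sigma> P) +
      (\<Sum>\<sigma>\<in>UNIV. \<Sum>j\<in>UNIV. (liftA (A1 I j \<sigma>) P - that A1 (I @ [j]) \<sigma> P) * Xi1 Xi \<sigma> j P))"

end

theory Submission
  imports Defs
begin



definition swp :: "'a list \<Rightarrow> nat \<Rightarrow> 'a list" where
  "swp L i = L[i := L ! Suc i, Suc i := L ! i]"

definition invset :: "'a::linorder list \<Rightarrow> (nat \<times> nat) set" where
  "invset js = {(a, b). a < b \<and> b < length js \<and> js ! b < js ! a}"

lemma inversions_invset: "inversions js = card (invset js)"
  by (simp add: inversions_def invset_def)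

lemma finite_invset: "finite (invset js)"
  by (rule finite_subset[of _ "{..<length js} \<times> {..<length js}"]) (auto simp: invset_def)

lemma length_swp[simp]: "length (swp L i) = length L"
  by (simp add: swp_def)

lemma nth_swp: "Suc i < length L \<Longrightarrow> k < length L \<Longrightarrow>
   swp L i ! k = L ! (Transposition.transpose i (Suc i) k)"
  by (auto simp: swp_def nth_list_update transpose_def)

lemma invset_map:
  assumes "Suc i < length L" "length L' = length L"
    and "\<And>k. k < length L \<Longrightarrow> L' ! k = L ! (Transposition.transpose i (Suc i) k)"
    and "(a, b) \<in> invset L - {(i, Suc i)}"
  shows "(Transposition.transpose i (Suc i) a, Transposition.transpose i (Suc i) b) \<in> invset L' - {(i, Suc i)}"
proof -
  let ?t = "Transposition.transpose i (Suc i)"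
  have ab: "a < b" "b < length L" "L ! b < L ! a" "(a, b) \<noteq> (i, Suc i)"
    using assms(4) by (auto simp: invset_def)
  have tt: "?t (?t k) = k" for k by simp
  have lt: "?t a < ?t b" using ab unfolding Transposition.transpose_def by auto
  have tb: "?t b < length L" using ab assms(1) by (auto simp: Transposition.transpose_def)
  have ta: "?t a < length L" using ab assms(1) by (auto simp: Transposition.transpose_def)
  have "L' ! ?t b = L ! b" "L' ! ?t a = L ! a"
    using assms(3)[OF tb] assms(3)[OF ta] by simp_all
  moreover have "(?t a, ?t b) \<noteq> (i, Suc i)"
    using ab unfolding Transposition.transpose_def by (auto split: if_splits)
  ultimately show ?thesis using lt tb ab assms(2) unfolding invset_def by simp
qed

lemma ds_form_swp:
  fixes L :: "'n::{finite,linorder} list"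
  assumes "Suc i < length L"
  shows "ds_form (swp L i) = - ds_form L"
proof (cases "L ! i = L ! Suc i")
  case True
  then have "swp L i = L" by (metis list_update_id swp_def)
  moreover have "\<not> distinct L" using True assms
    by (metis Suc_lessD distinct_conv_nth n_not_Suc_n)
  ultimately show ?thesis by (simp add: ds_form_def)
next
  case False
  let ?t = "Transposition.transpose i (Suc i)"
  let ?L' = "swp L i"
  have dist: "distinct ?L' = distinct L"
    by (simp add: swp_def distinct_swap assms Suc_lessD)
  show ?thesis
  proof (cases "distinct L \<and> length L = CARD('n)")
    case False
    then show ?thesis using dist by (auto simp: ds_form_def)
  next
    case True
    have n1: "\<And>k. k < length L \<Longrightarrow> ?L' ! k = L ! ?t k" using nth_swp assms by blast
    have n2: "L ! k = ?L' ! ?t k" if "k < length ?L'" for k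
    proof -
      have "?t k < length L" using that assms by (simp add: Transposition.transpose_def)
      from n1[OF this] show ?thesis by simp
    qed
    have im: "map_prod ?t ?t ` (invset L - {(i, Suc i)}) = invset ?L' - {(i, Suc i)}"
    proof
      show "map_prod ?t ?t ` (invset L - {(i, Suc i)}) \<subseteq> invset ?L' - {(i, Suc i)}"
      proof (rule image_subsetI)
        fix p assume p: "p \<in> invset L - {(i, Suc i)}"
        obtain a b where ab: "p = (a, b)" by (cases p)
        have "(?t a, ?t b) \<in> invset ?L' - {(i, Suc i)}"
          by (rule invset_map[of i L ?L' a b]) (use n1 assms p ab in auto)
        then show "map_prod ?t ?t p \<in> invset ?L' - {(i, Suc i)}" using ab by simp
      qed
      show "invset ?L' - {(i, Suc i)} \<subseteq> map_prod ?t ?t ` (invset L - {(i, Suc i)})"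
      proof
        fix p assume p: "p \<in> invset ?L' - {(i, Suc i)}"
        obtain a b where ab: "p = (a, b)" by (cases p)
        have "(?t a, ?t b) \<in> invset L - {(i, Suc i)}"
          by (rule invset_map[of i ?L' L a b]) (use n2 assms p ab in auto)
        moreover have "p = map_prod ?t ?t (?t a, ?t b)" using ab by simp
        ultimately show "p \<in> map_prod ?t ?t ` (invset L - {(i, Suc i)})" by blast
      qed
    qed
    have inj0: "inj (map_prod ?t ?t)" by (simp add: prod.inj_map inj_transpose)
    have inj: "inj_on (map_prod ?t ?t) X" for X
      using inj0 inj_on_subset subset_UNIV by blast
    have c: "card (invset ?L' - {(i, Suc i)}) = card (invset L - {(i, Suc i)})"
      using card_image[OF inj, of "invset L - {(i, Suc i)}"] im by simp
    have fin: "finite (invset L)" "finite (invset ?L')" by (simp_all add: finite_invset)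
    have m1: "(i, Suc i) \<in> invset L \<longleftrightarrow> L ! Suc i < L ! i" using assms by (auto simp: invset_def)
    have m2: "(i, Suc i) \<in> invset ?L' \<longleftrightarrow> L ! i < L ! Suc i" using assms
      by (auto simp: invset_def swp_def nth_list_update)
    have cardS: "card X = card (X - {x}) + (if x \<in> X then 1 else 0)" if "finite X" for X :: "(nat \<times> nat) set" and x
    proof (cases "x \<in> X")
      case True
      from card_Suc_Diff1[OF that True] True show ?thesis by simp
    qed simp
    have "(-1::real) ^ card (invset ?L') = - ((-1) ^ card (invset L))"
    proof (cases "L ! Suc i < L ! i")
      case True
      then have "\<not> L ! i < L ! Suc i" by auto
      then have "card (invset L) = Suc (card (invset ?L'))"
        using cardS[OF fin(1), of "(i, Suc i)"] cardS[OF fin(2), of "(i, Suc i)"] m1 m2 c True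
        by simp
      then show ?thesis by simp
    next
      case F: False
      then have "L ! i < L ! Suc i" using \<open>L ! i \<noteq> L ! Suc i\<close> by auto
      then have "card (invset ?L') = Suc (card (invset L))"
        using cardS[OF fin(1), of "(i, Suc i)"] cardS[OF fin(2), of "(i, Suc i)"] m1 m2 c F
        by simp
      then show ?thesis by simp
    qed
    then show ?thesis using True dist by (simp add: ds_form_def inversions_invset)
  qed
qed


definition alt_adj :: "('a list \<Rightarrow> real) \<Rightarrow> bool" where
  "alt_adj F \<longleftrightarrow> (\<forall>L i. Suc i < length L \<longrightarrow> F (swp L i) = - F L)"

definition sym_adj :: "('a list \<Rightarrow> real) \<Rightarrow> bool" where
  "sym_adj F \<longleftrightarrow> (\<forall>L i. Suc i < length L \<longrightarrow> F (swp L i) = F L)"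

lemma alt_adj_ds_form: "alt_adj (ds_form :: 'n::{finite,linorder} list \<Rightarrow> real)"
  using ds_form_swp unfolding alt_adj_def by blast

lemma swp_append: "Suc i < length K \<Longrightarrow> swp (K @ R) i = swp K i @ R"
  by (simp add: swp_def list_update_append nth_append)

lemma alt_adj_append: "alt_adj F \<Longrightarrow> alt_adj (\<lambda>K. F (K @ R))"
  unfolding alt_adj_def
proof (intro allI impI)
  fix L :: "'a list" and i assume F: "\<forall>L i. Suc i < length L \<longrightarrow> F (swp L i) = - F L" and i: "Suc i < length L"
  have "F (swp (L @ R) i) = - F (L @ R)" using F i by simp
  then show "F (swp L i @ R) = - F (L @ R)" using swp_append[OF i] by simp
qed

lemma swp_mid: "swp (xs @ x # y # r) (length xs) = xs @ y # x # r"
  by (simp add: swp_def list_update_append nth_append)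

lemma alt_adj_move:
  assumes "alt_adj F"
  shows "F (xs @ x # ys @ zs) = (-1) ^ length ys * F (xs @ ys @ x # zs)"
proof (induction ys arbitrary: xs)
  case Nil then show ?case by simp
next
  case (Cons y ys)
  have "Suc (length xs) < length (xs @ x # y # ys @ zs)" by simp
  then have "F (swp (xs @ x # y # ys @ zs) (length xs)) = - F (xs @ x # y # ys @ zs)"
    using assms unfolding alt_adj_def by blast
  then have "F (xs @ x # y # ys @ zs) = - F (swp (xs @ x # y # ys @ zs) (length xs))" by simp
  also have "swp (xs @ x # y # ys @ zs) (length xs) = (xs @ [y]) @ x # ys @ zs"
    using swp_mid[of xs x y "ys @ zs"] by simp
  also have "F ((xs @ [y]) @ x # ys @ zs) = (-1) ^ length ys * F ((xs @ [y]) @ ys @ x # zs)"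
    by (rule Cons.IH)
  finally show ?case by simp
qed

lemma alt_adj_nondistinct:
  assumes "alt_adj F" "\<not> distinct L"
  shows "F L = 0"
proof -
  obtain xs ys zs y where L: "L = xs @ [y] @ ys @ [y] @ zs" using not_distinct_decomp[OF assms(2)] by blast
  let ?M = "(xs @ ys) @ y # y # zs"
  have FL: "F L = (-1) ^ length ys * F (xs @ ys @ y # y # zs)"
    using alt_adj_move[OF assms(1), of xs y ys "y # zs"] L by simp
  have sw: "swp ?M (length (xs @ ys)) = ?M" using swp_mid[of "xs @ ys" y y zs] by simp
  have le: "Suc (length (xs @ ys)) < length ?M" by simp
  have "F ?M = - F ?M" using assms(1) sw le unfolding alt_adj_def by metis
  then have "F ?M = 0" by simp
  then show ?thesis using FL by simp
qed

lemma sym_adj_mult: "alt_adj F \<Longrightarrow> alt_adj G \<Longrightarrow> sym_adj (\<lambda>L. F L * G L)"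
  unfolding alt_adj_def sym_adj_def by simp

lemma sym_adj_Cons: "sym_adj h \<Longrightarrow> sym_adj (\<lambda>zs. h (y # zs))"
  unfolding sym_adj_def
proof (intro allI impI)
  fix L :: "'a list" and i assume h: "\<forall>L i. Suc i < length L \<longrightarrow> h (swp L i) = h L" and i: "Suc i < length L"
  have "swp (y # L) (Suc i) = y # swp L i" by (simp add: swp_def)
  then show "h (y # swp L i) = h (y # L)" using h i by (metis Suc_less_eq length_Cons)
qed

lemma sym_adj_insort: "sym_adj h \<Longrightarrow> h (x # ys) = h (insort x ys)"
proof (induction ys arbitrary: h)
  case Nil then show ?case by simp
next
  case (Cons y ys)
  show ?case
  proof (cases "x \<le> y")
    case True then show ?thesis by simp
  next
    case False
    have "swp (x # y # ys) 0 = y # x # ys" by (simp add: swp_def)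
    then have "h (x # y # ys) = h (y # x # ys)" using Cons.prems unfolding sym_adj_def
      by (metis length_Cons zero_less_Suc Suc_less_eq)
    also have "\<dots> = h (y # insort x ys)"
      using Cons.IH[OF sym_adj_Cons[OF Cons.prems, of y]] by simp
    finally show ?thesis using False by simp
  qed
qed

lemma sym_adj_sort: "sym_adj h \<Longrightarrow> h L = h (sort L)"
proof (induction L arbitrary: h)
  case Nil then show ?case by simp
next
  case (Cons x xs)
  have "h (x # xs) = h (x # sort xs)" using Cons.IH[OF sym_adj_Cons[OF Cons.prems, of x]] by simp
  also have "\<dots> = h (insort x (sort xs))" by (rule sym_adj_insort[OF Cons.prems])
  finally show ?case by simp
qed

lemma sym_adj_mset: "sym_adj (h :: 'a::linorder list \<Rightarrow> real) \<Longrightarrow> mset K = mset K' \<Longrightarrow> h K = h K'"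
proof -
  assume h: "sym_adj h" and m: "mset K = mset K'"
  have "sort K' = sort K" by (rule properties_for_sort) (simp_all add: m)
  then show ?thesis using sym_adj_sort[OF h, of K] sym_adj_sort[OF h, of K'] by simp
qed

definition restr :: "nat \<Rightarrow> ('a list \<Rightarrow> real) \<Rightarrow> 'a list \<Rightarrow> real" where
  "restr p g L = (if length L = p then g L else 0)"

lemma antisym_alt_adj: "antisym_idx p g \<Longrightarrow> alt_adj (restr p g)"
  unfolding alt_adj_def
proof (intro allI impI)
  fix L :: "'a list" and i assume a: "antisym_idx p g" and i: "Suc i < length L"
  show "restr p g (swp L i) = - restr p g L"
  proof (cases "length L = p")
    case True
    then have "g (L[i := L ! Suc i, Suc i := L ! i]) = - g L"
      using a i unfolding antisym_idx_def by blast
    then show ?thesis using True by (simp add: restr_def swp_def)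
  qed (simp add: restr_def)
qed

lemma antisym_nondistinct: "antisym_idx p g \<Longrightarrow> length L = p \<Longrightarrow> \<not> distinct L \<Longrightarrow> g L = 0"
proof -
  assume a: "antisym_idx p g" and l: "length L = p" and d: "\<not> distinct L"
  have "restr p g L = 0" by (rule alt_adj_nondistinct[OF antisym_alt_adj[OF a] d])
  then show ?thesis using l by (simp add: restr_def)
qed

lemma finite_len: "finite {I :: 'a::finite list. length I = s}"
  using finite_lists_length_eq[of "UNIV :: 'a set" s] by simp

lemma ds_form_nz: "ds_form (L :: 'n::{finite,linorder} list) \<noteq> 0 \<longleftrightarrow> distinct L \<and> length L = CARD('n)"
  by (simp add: ds_form_def)

lemma distinct_full: "distinct (L :: 'n::finite list) \<Longrightarrow> length L = CARD('n) \<Longrightarrow> set L = UNIV"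
proof -
  assume "distinct L" "length L = CARD('n)"
  then have "card (set L) = card (UNIV :: 'n set)" by (simp add: distinct_card)
  then show ?thesis using card_subset_eq[OF finite_class.finite_UNIV subset_UNIV] by blast
qed

lemma hform_coeff_zero:
  fixes f :: "'n::{finite,linorder} list \<Rightarrow> real"
  assumes anti: "antisym_idx s f" and sn: "s \<le> CARD('n)"
    and z: "\<And>js. (\<Sum>I\<in>{I. length I = s}. f I * ds_idx I js) = 0" and I: "length I = s"
  shows "f I = 0"
proof (cases "distinct I")
  case False then show ?thesis using antisym_nondistinct[OF anti I] by simp
next
  case dI: True
  define R where "R = sorted_list_of_set (UNIV - set I)"
  have dR: "distinct R" and sR: "set R = UNIV - set I" by (simp_all add: R_def)
  have lR: "length R = CARD('n) - s"
    using distinct_card[OF dR] sR dI I by (simp add: card_Diff_subset distinct_card)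
  define h where "h = (\<lambda>L. restr s f L * ds_form (L @ R))"
  have sh: "sym_adj h" unfolding h_def
    by (rule sym_adj_mult[OF antisym_alt_adj[OF anti] alt_adj_append[OF alt_adj_ds_form]])
  define S where "S = {I'. length I' = s \<and> mset I' = mset I}"
  have SS: "S \<subseteq> {I. length I = s}" by (auto simp: S_def)
  have fin: "finite {I :: 'n list. length I = s}" by (rule finite_len)
  have "0 = (\<Sum>I'\<in>{I. length I = s}. f I' * ds_idx I' R)" using z by simp
  also have "\<dots> = (\<Sum>I'\<in>{I. length I = s}. h I')"
    by (rule sum.cong[OF refl]) (simp add: h_def restr_def ds_idx_def)
  also have "\<dots> = (\<Sum>I'\<in>S. h I')"
  proof (rule sum.mono_neutral_right[OF fin SS], rule ballI)
    fix I' assume I': "I' \<in> {I. length I = s} - S"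
    show "h I' = 0"
    proof (rule ccontr)
      assume "h I' \<noteq> 0"
      then have "ds_form (I' @ R) \<noteq> 0" by (auto simp: h_def)
      then have d: "distinct (I' @ R)" "length (I' @ R) = CARD('n)" by (simp_all add: ds_form_nz)
      then have "set (I' @ R) = UNIV" by (rule distinct_full)
      then have "set I' = set I" using d(1) sR by auto
      then have "mset I' = mset I" using d(1) dI by (simp add: set_eq_iff_mset_eq_distinct)
      then show False using I' by (auto simp: S_def)
    qed
  qed
  also have "\<dots> = (\<Sum>I'\<in>S. h I)"
    by (rule sum.cong[OF refl], rule sym_adj_mset[OF sh]) (simp add: S_def)
  also have "\<dots> = of_nat (card S) * h I" by simp
  finally have "of_nat (card S) * h I = 0" by simp
  moreover have "card S \<noteq> 0"
  proof -
    have "I \<in> S" by (simp add: S_def I)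
    then show ?thesis using finite_subset[OF SS fin] by (metis card_0_eq empty_iff)
  qed
  ultimately have "h I = 0" by simp
  moreover have "ds_form (I @ R) \<noteq> 0"
  proof -
    have "distinct (I @ R)" using dI dR sR by simp
    moreover have "length (I @ R) = CARD('n)" using lR I sn by simp
    ultimately show ?thesis by (simp add: ds_form_nz)
  qed
  ultimately show ?thesis by (simp add: h_def restr_def I)
qed




definition dl :: "nat \<Rightarrow> 'a list \<Rightarrow> 'a list" where
  "dl a xs = take a xs @ drop (Suc a) xs"

lemma dl_left: "a < length u \<Longrightarrow> dl a (u @ r) = dl a u @ r"
  by (simp add: dl_def)

lemma dl_right: "dl (length u + k) (u @ r) = u @ dl k r"
  by (simp add: dl_def)

lemma length_dl: "a < length xs \<Longrightarrow> length (dl a xs) = length xs - 1"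
  by (simp add: dl_def)

lemma alt_adj_prepend: "alt_adj F \<Longrightarrow> alt_adj (\<lambda>R. F (K @ R))"
  unfolding alt_adj_def
proof (intro allI impI)
  fix L :: "'a list" and i assume F: "\<forall>L i. Suc i < length L \<longrightarrow> F (swp L i) = - F L" and i: "Suc i < length L"
  have "swp (K @ L) (length K + i) = K @ swp L i"
    by (simp add: swp_def list_update_append nth_append)
  moreover have "Suc (length K + i) < length (K @ L)" using i by simp
  ultimately show "F (K @ swp L i) = - F (K @ L)" using F by metis
qed

lemma alt_adj_sum: "finite S \<Longrightarrow> (\<And>x. x \<in> S \<Longrightarrow> alt_adj (F x)) \<Longrightarrow> alt_adj (\<lambda>L. \<Sum>x\<in>S. F x L)"
  unfolding alt_adj_def by (simp add: sum_negf)

lemma alt_adj_cmult: "alt_adj F \<Longrightarrow> alt_adj (\<lambda>L. c * F L)"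
  unfolding alt_adj_def by simp

lemma alt_adj_diff: "alt_adj F \<Longrightarrow> alt_adj G \<Longrightarrow> alt_adj (\<lambda>L. F L - G L)"
  unfolding alt_adj_def by simp

lemma G_alt_adj:
  assumes T: "alt_adj T"
  shows "alt_adj (\<lambda>js. \<Sum>a<length js. (-1) ^ a * (if js ! a = j then T (dl a js) else 0))"
  unfolding alt_adj_def
proof (intro allI impI)
  fix js :: "'a list" and i assume i: "Suc i < length js"
  let ?t = "Transposition.transpose i (Suc i)"
  define trm where "trm = (\<lambda>js a. (-1::real) ^ a * (if js ! a = j then T (dl a js) else 0))"
  define u where "u = take i js"
  define x where "x = js ! i"
  define y where "y = js ! Suc i"
  define w where "w = drop (Suc (Suc i)) js"
  have js: "js = u @ x # y # w" unfolding u_def x_def y_def w_def using i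
    by (metis Cons_nth_drop_Suc Suc_lessD append_take_drop_id)
  have lu: "length u = i" using i by (simp add: u_def)
  have js': "swp js i = u @ y # x # w" using swp_mid[of u x y w] js lu by simp
  have Tn: "T (swp L k) = - T L" if "Suc k < length L" for L k using T that unfolding alt_adj_def by blast
  have key: "trm (swp js i) a = - trm js (?t a)" if a: "a < length js" for a
  proof -
    consider "a < i" | "a = i" | "a = Suc i" | "Suc i < a" by linarith
    then show ?thesis
    proof cases
      case 1
      then have ta: "?t a = a" by simp
      have n: "swp js i ! a = js ! a" using 1 js js' lu by (simp add: nth_append)
      have d1: "dl a js = (dl a u @ [x]) @ y # w" using 1 js lu by (simp add: dl_left)
      have d2: "dl a (swp js i) = (dl a u @ [y]) @ x # w" using 1 js' lu by (simp add: dl_left)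
      have "dl a (swp js i) = swp (dl a js) (length (dl a u))"
        using d1 d2 swp_mid[of "dl a u" x y w] by simp
      moreover have "Suc (length (dl a u)) < length (dl a js)" using d1 by simp
      ultimately have "T (dl a (swp js i)) = - T (dl a js)" using Tn by simp
      then show ?thesis using n ta by (simp add: trm_def)
    next
      case 2
      have "dl a (swp js i) = u @ x # w" using 2 js' lu dl_right[of u 0] by (simp add: dl_def)
      moreover have "dl (Suc i) js = u @ x # w" using js lu dl_right[of u 1] by (simp add: dl_def)
      moreover have "swp js i ! a = y" using 2 js' lu by (simp add: nth_append)
      moreover have "js ! Suc i = y" using js lu by (simp add: nth_append)
      ultimately show ?thesis using 2 by (simp add: trm_def)
    next
      case 3
      have "dl a (swp js i) = u @ y # w" using 3 js' lu dl_right[of u 1] by (simp add: dl_def)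
      moreover have "dl i js = u @ y # w" using js lu dl_right[of u 0] by (simp add: dl_def)
      moreover have "swp js i ! a = x" using 3 js' lu by (simp add: nth_append)
      moreover have "js ! i = x" using js lu by (simp add: nth_append)
      ultimately show ?thesis using 3 by (simp add: trm_def)
    next
      case 4
      then have ta: "?t a = a" by simp
      obtain k where k: "a = length u + Suc (Suc k)" using 4 lu by (metis add_Suc_right less_iff_Suc_add add_Suc)
      have n: "swp js i ! a = js ! a" using k js js' by (simp add: nth_append)
      have d1: "dl a js = u @ x # y # dl k w" using k js dl_right[of u "Suc (Suc k)" "x # y # w"] by (simp add: dl_def)
      have d2: "dl a (swp js i) = u @ y # x # dl k w" using k js' dl_right[of u "Suc (Suc k)" "y # x # w"] by (simp add: dl_def)
      have "dl a (swp js i) = swp (dl a js) (length u)"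
        using d1 d2 swp_mid[of u x y "dl k w"] by simp
      moreover have "Suc (length u) < length (dl a js)" using d1 by simp
      ultimately have "T (dl a (swp js i)) = - T (dl a js)" using Tn by simp
      then show ?thesis using n ta by (simp add: trm_def)
    qed
  qed
  have perm: "?t permutes {..<length js}" using i by (intro permutes_swap_id) auto
  have "(\<Sum>a<length (swp js i). trm (swp js i) a) = (\<Sum>a<length js. - trm js (?t a))"
    using key by simp
  also have "\<dots> = - (\<Sum>a<length js. trm js (?t a))" by (simp add: sum_negf)
  also have "(\<Sum>a<length js. trm js (?t a)) = (\<Sum>a<length js. trm js a)"
    using sum.permute[OF perm, of "trm js"] by (simp add: comp_def)
  finally show "(\<Sum>a<length (swp js i). (-1) ^ a * (if swp js i ! a = j then T (dl a (swp js i)) else 0))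
     = - (\<Sum>a<length js. (-1) ^ a * (if js ! a = j then T (dl a js) else 0))"
    by (simp add: trm_def)
qed


lemma sum_index_delta:
  assumes "distinct K" "j \<in> set K"
  shows "(\<Sum>p<length K. (if K ! p = j then c else 0)) = (c::real)"
proof -
  obtain q where q: "q < length K" "K ! q = j" using assms(2) by (metis in_set_conv_nth)
  have "(\<Sum>p<length K. (if K ! p = j then c else 0)) = (\<Sum>p<length K. (if p = q then c else 0))"
  proof (rule sum.cong[OF refl])
    fix p assume "p \<in> {..<length K}"
    then have p: "p < length K" by simp
    have "K ! p = j \<longleftrightarrow> p = q"
      using assms(1) p q nth_eq_iff_index_eq by metis
    then show "(if K ! p = j then c else 0) = (if p = q then c else 0)" by simp
  qed
  also have "\<dots> = c" using q by (simp add: sum.delta)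
  finally show ?thesis .
qed

lemma T_lemma:
  fixes g :: "'n::{finite,linorder} list \<Rightarrow> real"
  assumes anti: "antisym_idx (Suc s) g" and jR: "j \<notin> set R"
  shows "(\<Sum>K\<in>{K. length K = Suc s}. g K * ds_form (K @ R))
       = of_nat (Suc s) * (\<Sum>I\<in>{I. length I = s}. g (I @ [j]) * ds_form (I @ j # R))"
proof -
  define h where "h = (\<lambda>K. restr (Suc s) g K * ds_form (K @ R))"
  have sh: "sym_adj h" unfolding h_def
    by (rule sym_adj_mult[OF antisym_alt_adj[OF anti] alt_adj_append[OF alt_adj_ds_form]])
  let ?LS = "{K :: 'n list. length K = Suc s}"
  let ?L0 = "{I :: 'n list. length I = s}"
  have finLS: "finite ?LS" "finite ?L0" by (simp_all add: finite_len)
  have step1: "h K = (\<Sum>p<Suc s. (if K ! p = j then h K else 0))" if K: "K \<in> ?LS" for K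
  proof (cases "h K = 0")
    case True
    have "\<And>p. (if K ! p = j then h K else 0) = 0" using True by simp
    then show ?thesis using True by simp
  next
    case False
    then have dK: "distinct K" using antisym_nondistinct[OF anti] K by (auto simp: h_def restr_def)
    have "ds_form (K @ R) \<noteq> 0" using False by (auto simp: h_def)
    then have d: "distinct (K @ R)" "length (K @ R) = CARD('n)" by (simp_all add: ds_form_nz)
    then have "set (K @ R) = UNIV" by (rule distinct_full)
    then have "j \<in> set K" using jR by auto
    then show ?thesis using sum_index_delta[OF dK, of j "h K"] K by simp
  qed
  have "(\<Sum>K\<in>?LS. g K * ds_form (K @ R)) = (\<Sum>K\<in>?LS. h K)"
    by (rule sum.cong[OF refl]) (simp add: h_def restr_def)
  also have "\<dots> = (\<Sum>K\<in>?LS. \<Sum>p<Suc s. (if K ! p = j then h K else 0))"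
    using step1 by (rule sum.cong[OF refl])
  also have "\<dots> = (\<Sum>p<Suc s. \<Sum>K\<in>?LS. (if K ! p = j then h K else 0))"
    by (rule sum.swap)
  also have "\<dots> = (\<Sum>p<Suc s. \<Sum>K\<in>{K\<in>?LS. K ! p = j}. h K)"
    by (rule sum.cong[OF refl], rule sum.inter_filter[OF finLS(1), symmetric])
  also have "\<dots> = (\<Sum>p<Suc s. \<Sum>I\<in>?L0. h (I @ [j]))"
  proof (rule sum.cong[OF refl])
    fix p assume "p \<in> {..<Suc s}"
    then have p: "p \<le> s" by simp
    have "(\<Sum>I\<in>?L0. h (take p I @ j # drop p I)) = (\<Sum>K\<in>{K\<in>?LS. K ! p = j}. h K)"
    proof (rule sum.reindex_bij_witness[where i = "\<lambda>K. take p K @ drop (Suc p) K" and j = "\<lambda>I. take p I @ j # drop p I"])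
      fix I assume I: "I \<in> ?L0"
      then show "take p (take p I @ j # drop p I) @ drop (Suc p) (take p I @ j # drop p I) = I"
        using p by simp
      show "take p I @ j # drop p I \<in> {K\<in>?LS. K ! p = j}"
        using I p by (simp add: nth_append)
      show "h (take p I @ j # drop p I) = h (take p I @ j # drop p I)" by simp
    next
      fix K assume K: "K \<in> {K\<in>?LS. K ! p = j}"
      then have lK: "length K = Suc s" and Kp: "K ! p = j" by auto
      have "take p K @ drop (Suc p) K = dl p K" by (simp add: dl_def)
      show "take p (take p K @ drop (Suc p) K) @ j # drop p (take p K @ drop (Suc p) K) = K"
      proof -
        have "p < length K" using lK p by simp
        then have "take p K @ K ! p # drop (Suc p) K = K" using id_take_nth_drop[of p K] by simp
        then show ?thesis using lK Kp p by simp
      qed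
      show "take p K @ drop (Suc p) K \<in> ?L0" using lK p by simp
    qed
    then have "(\<Sum>K\<in>{K\<in>?LS. K ! p = j}. h K) = (\<Sum>I\<in>?L0. h (take p I @ j # drop p I))" by simp
    also have "\<dots> = (\<Sum>I\<in>?L0. h (I @ [j]))"
    proof (rule sum.cong[OF refl], rule sym_adj_mset[OF sh])
      fix I :: "'n list"
      show "mset (take p I @ j # drop p I) = mset (I @ [j])"
      proof -
        have "mset I = mset (take p I) + mset (drop p I)" by (metis append_take_drop_id mset_append)
        then show ?thesis by simp
      qed
    qed
    finally show "(\<Sum>K\<in>{K\<in>?LS. K ! p = j}. h K) = (\<Sum>I\<in>?L0. h (I @ [j]))" .
  qed
  also have "\<dots> = of_nat (Suc s) * (\<Sum>I\<in>?L0. h (I @ [j]))" by simp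
  also have "(\<Sum>I\<in>?L0. h (I @ [j])) = (\<Sum>I\<in>?L0. g (I @ [j]) * ds_form (I @ j # R))"
    by (rule sum.cong[OF refl]) (simp add: h_def restr_def)
  finally show ?thesis .
qed


lemma sum_nth_delta:
  assumes "distinct js" "q < length js" "js ! q = j"
  shows "(\<Sum>a<length js. (if js ! a = j then f a else 0)) = (f q :: real)"
proof -
  have "(\<Sum>a<length js. (if js ! a = j then f a else 0)) = (\<Sum>a<length js. (if a = q then f a else 0))"
  proof (rule sum.cong[OF refl])
    fix a assume "a \<in> {..<length js}"
    then have a: "a < length js" by simp
    have "js ! a = j \<longleftrightarrow> a = q"
      using assms a nth_eq_iff_index_eq by metis
    then show "(if js ! a = j then f a else 0) = (if a = q then f a else 0)" by simp
  qed
  also have "\<dots> = f q" using assms by (simp add: sum.delta)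
  finally show ?thesis .
qed

lemma wedge_lemma:
  fixes g :: "'n::{finite,linorder} list \<Rightarrow> real"
  assumes anti: "antisym_idx (Suc s) g"
  shows "(\<Sum>K\<in>{K. length K = Suc s}. g K * wedge_dx j (ds_idx K) js)
       = of_nat (Suc s) * (\<Sum>I\<in>{I. length I = s}. g (I @ [j]) * ds_idx I js)"
proof -
  let ?LS = "{K :: 'n list. length K = Suc s}"
  let ?L0 = "{I :: 'n list. length I = s}"
  define T where "T = (\<lambda>R. \<Sum>K\<in>?LS. g K * ds_form (K @ R))"
  have aT: "alt_adj T" unfolding T_def
    by (rule alt_adj_sum[OF finite_len], rule alt_adj_cmult, rule alt_adj_prepend[OF alt_adj_ds_form])
  define G where "G = (\<lambda>js. \<Sum>a<length js. (-1) ^ a * (if js ! a = j then T (dl a js) else 0))"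
  have aG: "alt_adj G" unfolding G_def by (rule G_alt_adj[OF aT])
  have "(\<Sum>K\<in>?LS. g K * wedge_dx j (ds_idx K) js)
      = (\<Sum>K\<in>?LS. \<Sum>a<length js. (-1) ^ a * (if js ! a = j then g K * ds_form (K @ dl a js) else 0))"
    unfolding wedge_dx_def sum_distrib_left
    by (rule sum.cong[OF refl], rule sum.cong[OF refl]) (simp add: ds_idx_def dl_def)
  also have "\<dots> = (\<Sum>a<length js. \<Sum>K\<in>?LS. (-1) ^ a * (if js ! a = j then g K * ds_form (K @ dl a js) else 0))"
    by (rule sum.swap)
  also have "\<dots> = G js"
    unfolding G_def T_def by (rule sum.cong[OF refl]) (simp add: sum_distrib_left)
  finally have L: "(\<Sum>K\<in>?LS. g K * wedge_dx j (ds_idx K) js) = G js" .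
  have "G js = of_nat (Suc s) * (\<Sum>I\<in>?L0. g (I @ [j]) * ds_form (I @ js))"
  proof (cases "distinct js")
    case False
    have "G js = 0" by (rule alt_adj_nondistinct[OF aG False])
    moreover have "ds_form (I @ js) = 0" for I using False by (simp add: ds_form_def)
    ultimately show ?thesis by simp
  next
    case dj: True
    show ?thesis
    proof (cases "j \<in> set js")
      case False
      then have "G js = 0" unfolding G_def by (simp add: in_set_conv_nth)
      moreover have "g (I @ [j]) * ds_form (I @ js) = 0" if I: "length I = s" for I
      proof (rule ccontr)
        assume nz: "g (I @ [j]) * ds_form (I @ js) \<noteq> 0"
        then have "ds_form (I @ js) \<noteq> 0" by simp
        then have d: "distinct (I @ js)" "length (I @ js) = CARD('n)" by (simp_all add: ds_form_nz)
        then have "set (I @ js) = UNIV" by (rule distinct_full)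
        then have "j \<in> set I" using False by auto
        then have "\<not> distinct (I @ [j])" by simp
        then have "g (I @ [j]) = 0" using antisym_nondistinct[OF anti] I by simp
        then show False using nz by simp
      qed
      ultimately show ?thesis by (simp add: sum.neutral)
    next
      case True
      then obtain q where q: "q < length js" "js ! q = j" by (metis in_set_conv_nth)
      have jsq: "js = take q js @ j # drop (Suc q) js" using q id_take_nth_drop by metis
      have jR: "j \<notin> set (dl q js)"
      proof -
        have "distinct (take q js @ j # drop (Suc q) js)" using dj jsq by metis
        then show ?thesis by (simp add: dl_def)
      qed
      have "G js = (-1) ^ q * T (dl q js)"
        unfolding G_def using sum_nth_delta[OF dj q, of "\<lambda>a. (-1) ^ a * T (dl a js)"]
        by (simp add: if_distrib[of "\<lambda>x. (-1) ^ _ * x"] cong: if_cong)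
      also have "T (dl q js) = of_nat (Suc s) * (\<Sum>I\<in>?L0. g (I @ [j]) * ds_form (I @ j # dl q js))"
        unfolding T_def by (rule T_lemma[OF anti jR])
      also have "(\<Sum>I\<in>?L0. g (I @ [j]) * ds_form (I @ j # dl q js))
               = (\<Sum>I\<in>?L0. (-1) ^ q * (g (I @ [j]) * ds_form (I @ js)))"
      proof (rule sum.cong[OF refl])
        fix I :: "'n list"
        have "ds_form (I @ j # take q js @ drop (Suc q) js) = (-1) ^ length (take q js) * ds_form (I @ take q js @ j # drop (Suc q) js)"
          by (rule alt_adj_move[OF alt_adj_ds_form])
        then have "ds_form (I @ j # dl q js) = (-1) ^ q * ds_form (I @ js)"
          using q jsq by (simp add: dl_def min_def)
        then show "g (I @ [j]) * ds_form (I @ j # dl q js) = (-1) ^ q * (g (I @ [j]) * ds_form (I @ js))"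
          by simp
      qed
      also have "\<dots> = (-1) ^ q * (\<Sum>I\<in>?L0. g (I @ [j]) * ds_form (I @ js))"
        by (simp add: sum_distrib_left)
      finally show ?thesis by (simp add: algebra_simps power_mult_distrib[symmetric] flip: power_add)
    qed
  qed
  then show ?thesis using L by (simp add: ds_idx_def)
qed


lemma map_transpose_update:
  assumes "length L = p" "a < p" "b < p"
  shows "map (\<lambda>k. L ! Transposition.transpose a b k) [0..<p] = L[a := L ! b, b := L ! a]"
  using assms by (intro nth_equalityI) (auto simp: nth_list_update Transposition.transpose_def)

lemma antisym_transpose:
  assumes anti: "antisym_idx p c" and L: "length L = p" and ab: "a < p" "b < p" "a \<noteq> b"
  shows "c (map (\<lambda>k. L ! Transposition.transpose a b k) [0..<p]) = - c L"
proof (cases "a < b")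
  case True
  then show ?thesis using anti L ab map_transpose_update[OF L ab(1,2)] unfolding antisym_idx_def by simp
next
  case False
  then have ba: "b < a" using ab by simp
  have "map (\<lambda>k. L ! Transposition.transpose a b k) [0..<p] = L[b := L ! a, a := L ! b]"
    using map_transpose_update[OF L ab(1,2)] ab by (simp add: list_update_swap)
  then show ?thesis using anti L ab ba unfolding antisym_idx_def by simp
qed

lemma antisym_sign:
  assumes anti: "antisym_idx p c" and K: "length K = p" and pi: "\<pi> permutes {..<p}"
  shows "c (map (\<lambda>k. K ! \<pi> k) [0..<p]) = of_int (sign \<pi>) * c K"
  using finite_lessThan[of p] pi
proof (induction rule: permutes_rev_induct)
  case id
  have "map (\<lambda>k. K ! id k) [0..<p] = K" using K by (intro nth_equalityI) auto
  then show ?case by simp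
next
  case (swap a b \<pi>)
  let ?L = "map (\<lambda>k. K ! \<pi> k) [0..<p]"
  have "map (\<lambda>k. K ! (\<pi> \<circ> Transposition.transpose a b) k) [0..<p]
      = map (\<lambda>k. ?L ! Transposition.transpose a b k) [0..<p]"
  proof (rule map_cong[OF refl])
    fix k assume "k \<in> set [0..<p]"
    then have "Transposition.transpose a b k < p" using swap(1,2) by (auto simp: Transposition.transpose_def)
    then show "K ! (\<pi> \<circ> Transposition.transpose a b) k = ?L ! Transposition.transpose a b k" by simp
  qed
  also have "c \<dots> = - c ?L" using antisym_transpose[OF anti _ _ _ swap(3)] swap(1,2) by simp
  also have "\<dots> = of_int (sign (\<pi> \<circ> Transposition.transpose a b)) * c K"
  proof -
    have "permutation \<pi>" using swap(4) by (metis finite_lessThan permutation_permutes)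
    then have "sign (\<pi> \<circ> Transposition.transpose a b) = - sign \<pi>"
      using swap(3) by (simp add: sign_compose permutation_swap_id sign_swap_id)
    then show ?thesis using swap(5) by simp
  qed
  finally show ?case .
qed

lemma alt_sign:
  assumes K: "length K = p" and pi: "\<pi> permutes {..<p}"
  shows "alt f (map (\<lambda>k. K ! \<pi> k) [0..<p]) = of_int (sign \<pi>) * alt f K"
proof -
  let ?P = "{\<rho>. \<rho> permutes {..<p}}"
  define F where "F = (\<lambda>\<sigma>. f (map (\<lambda>k. K ! \<sigma> k) [0..<p]))"
  have "alt f (map (\<lambda>k. K ! \<pi> k) [0..<p]) = (1 / fact p) * (\<Sum>\<rho>\<in>?P. of_int (sign \<rho>) * f (map (\<lambda>k. map (\<lambda>k. K ! \<pi> k) [0..<p] ! \<rho> k) [0..<p]))"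
    unfolding alt_def by simp
  also have "(\<Sum>\<rho>\<in>?P. of_int (sign \<rho>) * f (map (\<lambda>k. map (\<lambda>k. K ! \<pi> k) [0..<p] ! \<rho> k) [0..<p])) = (\<Sum>\<rho>\<in>?P. of_int (sign \<rho>) * F (\<pi> \<circ> \<rho>))"
    unfolding F_def
  proof (rule sum.cong[OF refl])
    fix \<rho> assume "\<rho> \<in> ?P"
    then have r: "\<rho> permutes {..<p}" by simp
    have "map (\<lambda>k. map (\<lambda>k. K ! \<pi> k) [0..<p] ! \<rho> k) [0..<p] = map (\<lambda>k. K ! \<pi> (\<rho> k)) [0..<p]"
    proof (rule map_cong[OF refl])
      fix k assume "k \<in> set [0..<p]"
      then have "\<rho> k < p" using permutes_in_image[OF r, of k] by simp
      then show "map (\<lambda>k. K ! \<pi> k) [0..<p] ! \<rho> k = K ! \<pi> (\<rho> k)" by simp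
    qed
    moreover have "map (\<lambda>k. K ! (\<pi> \<circ> \<rho>) k) [0..<p] = map (\<lambda>k. K ! \<pi> (\<rho> k)) [0..<p]" by simp
    ultimately show "of_int (sign \<rho>) * f (map (\<lambda>k. map (\<lambda>k. K ! \<pi> k) [0..<p] ! \<rho> k) [0..<p])
         = of_int (sign \<rho>) * f (map (\<lambda>k. K ! (\<pi> \<circ> \<rho>) k) [0..<p])" by (simp only:)
  qed
  also have "(\<Sum>\<rho>\<in>?P. of_int (sign \<rho>) * F (\<pi> \<circ> \<rho>)) = (\<Sum>\<rho>\<in>?P. of_int (sign \<pi>) * (of_int (sign (\<pi> \<circ> \<rho>)) * F (\<pi> \<circ> \<rho>)))"
  proof (rule sum.cong[OF refl])
    fix \<rho> assume "\<rho> \<in> ?P"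
    then have "permutation \<rho>" "permutation \<pi>" using pi by (auto simp: permutation_permutes)
    then have "sign (\<pi> \<circ> \<rho>) = sign \<pi> * sign \<rho>" by (simp add: sign_compose)
    then have "(of_int (sign \<pi>) :: real) * of_int (sign (\<pi> \<circ> \<rho>)) = of_int (sign \<rho>)"
      by (simp add: mult.assoc[symmetric] flip: of_int_mult)
    then show "of_int (sign \<rho>) * F (\<pi> \<circ> \<rho>) = of_int (sign \<pi>) * (of_int (sign (\<pi> \<circ> \<rho>)) * F (\<pi> \<circ> \<rho>))"
      by (simp add: mult.assoc[symmetric])
  qed
  also have "\<dots> = of_int (sign \<pi>) * (\<Sum>\<rho>\<in>?P. of_int (sign (\<pi> \<circ> \<rho>)) * F (\<pi> \<circ> \<rho>))"
    by (simp add: sum_distrib_left)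
  also have "(\<Sum>\<rho>\<in>?P. of_int (sign (\<pi> \<circ> \<rho>)) * F (\<pi> \<circ> \<rho>)) = (\<Sum>\<rho>\<in>?P. of_int (sign \<rho>) * F \<rho>)"
    using setum_permutations_compose_left[OF pi, of "\<lambda>\<rho>. of_int (sign \<rho>) * F \<rho>"] by simp
  finally show ?thesis unfolding alt_def F_def using K by simp
qed

lemma alt_antisym: "antisym_idx p (alt f)"
  unfolding antisym_idx_def
proof (intro allI impI)
  fix xs :: "'a list" and a b assume h: "length xs = p \<and> a < b \<and> b < p"
  have perm: "Transposition.transpose a b permutes {..<p}" using h by (intro permutes_swap_id) auto
  have "xs[a := xs ! b, b := xs ! a] = map (\<lambda>k. xs ! Transposition.transpose a b k) [0..<p]"
    using map_transpose_update[of "xs" p a b] h by simp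
  then show "alt f (xs[a := xs ! b, b := xs ! a]) = - alt f xs"
    using alt_sign[of "xs" p _ f, OF _ perm] h by (simp add: sign_swap_id)
qed

lemma alt_of_antisym:
  assumes anti: "antisym_idx p c" and K: "length K = p"
  shows "alt c K = c K"
proof -
  let ?P = "{\<rho>. \<rho> permutes {..<p}}"
  have "alt c K = (1 / fact p) * (\<Sum>\<rho>\<in>?P. of_int (sign \<rho>) * (of_int (sign \<rho>) * c K))"
    unfolding alt_def using K antisym_sign[OF anti K] by simp
  also have "\<dots> = (1 / fact p) * (\<Sum>\<rho>\<in>?P. c K)"
  proof -
    have sq: "(of_int (sign \<rho>) :: real) * (of_int (sign \<rho>) * c K) = c K" for \<rho> :: "nat \<Rightarrow> nat"
      by (simp add: mult.assoc[symmetric] flip: of_int_mult)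
    show ?thesis by (simp only: sq)
  qed
  also have "\<dots> = c K" using card_permutations[of "{..<p}" p] by simp
  finally show ?thesis .
qed

lemma alt_cong: "(\<And>L. length L = length K \<Longrightarrow> f L = g L) \<Longrightarrow> alt f K = alt g K"
  unfolding alt_def by (intro arg_cong[where f = "\<lambda>x. _ * x"] sum.cong refl) simp

lemma alt_diff: "alt (\<lambda>L. f L - g L) K = alt f K - alt g K"
  unfolding alt_def by (simp add: sum_subtractf algebra_simps)

lemma alt_cmult: "alt (\<lambda>L. c * f L) K = c * alt f K"
  unfolding alt_def by (simp add: sum_distrib_left algebra_simps)

lemma alt_zero: "alt (\<lambda>L. 0) K = 0"
  unfolding alt_def by simp

lemma antisym_snoc: "antisym_idx (Suc s) g \<Longrightarrow> antisym_idx s (\<lambda>I. g (I @ [j]))"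
  unfolding antisym_idx_def
proof (intro allI impI)
  fix xs :: "'a list" and a b
  assume g: "\<forall>xs a b. length xs = Suc s \<and> a < b \<and> b < Suc s \<longrightarrow> g (xs[a := xs ! b, b := xs ! a]) = - g xs"
    and h: "length xs = s \<and> a < b \<and> b < s"
  have "(xs @ [j])[a := (xs @ [j]) ! b, b := (xs @ [j]) ! a] = xs[a := xs ! b, b := xs ! a] @ [j]"
    using h by (simp add: list_update_append nth_append)
  then show "g (xs[a := xs ! b, b := xs ! a] @ [j]) = - g (xs @ [j])"
    using g h by (metis length_append_singleton less_SucI)
qed




lemma finite_msize: "finite {J :: 'a::finite multiset. size J \<le> N}"
proof -
  have "{J :: 'a multiset. size J \<le> N} \<subseteq> mset ` {xs. set xs \<subseteq> UNIV \<and> length xs \<le> N}"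
  proof
    fix J :: "'a multiset" assume "J \<in> {J. size J \<le> N}"
    moreover obtain xs where "mset xs = J" using ex_mset by blast
    ultimately show "J \<in> mset ` {xs. set xs \<subseteq> UNIV \<and> length xs \<le> N}" by auto
  qed
  moreover have "finite (mset ` {xs :: 'a list. set xs \<subseteq> UNIV \<and> length xs \<le> N})"
    by (rule finite_imageI, rule finite_lists_length_le) simp
  ultimately show ?thesis by (rule finite_subset)
qed

lemma has_order_upd_y: "has_order k F \<Longrightarrow> k < size J \<Longrightarrow> F (upd_y \<sigma> J t P) = F P"
proof -
  assume h: "has_order k F" and s: "k < size J"
  have "\<forall>J'. size J' \<le> k \<longrightarrow> snd (upd_y \<sigma> J t P) J' = snd P J'" using s by (auto simp: upd_y_def)
  moreover have "fst (upd_y \<sigma> J t P) = fst P" by (simp add: upd_y_def)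
  ultimately show ?thesis using h unfolding has_order_def by blast
qed

lemma pdy_high: "has_order k F \<Longrightarrow> k < size J \<Longrightarrow> pdy \<sigma> J F P = 0"
  unfolding pdy_def using has_order_upd_y[of k F J \<sigma> _ P] by (simp add: deriv_const)

lemma has_order_ford: "has_order k F \<Longrightarrow> has_order (ford F) F"
  unfolding ford_def by (rule LeastI)

lemma ford_le: "has_order k F \<Longrightarrow> ford F \<le> k"
  unfolding ford_def by (rule Least_le)

lemma fd_alt:
  assumes "has_order k F" "k \<le> N"
  shows "fd i F P = pdx i F P +
     (\<Sum>J\<in>{J. size J \<le> N}. \<Sum>\<sigma>\<in>UNIV. snd P (J + {#i#}) $ \<sigma> * pdy \<sigma> J F P)"
proof -
  have o: "has_order (ford F) F" by (rule has_order_ford[OF assms(1)])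
  have le: "ford F \<le> N" using ford_le[OF assms(1)] assms(2) by simp
  have "(\<Sum>J\<in>{J. size J \<le> ford F}. \<Sum>\<sigma>\<in>UNIV. snd P (J + {#i#}) $ \<sigma> * pdy \<sigma> J F P)
      = (\<Sum>J\<in>{J. size J \<le> N}. \<Sum>\<sigma>\<in>UNIV. snd P (J + {#i#}) $ \<sigma> * pdy \<sigma> J F P)"
  proof (rule sum.mono_neutral_left[OF finite_msize])
    show "{J. size J \<le> ford F} \<subseteq> {J. size J \<le> N}" using le by auto
    show "\<forall>J\<in>{J. size J \<le> N} - {J. size J \<le> ford F}. (\<Sum>\<sigma>\<in>UNIV. snd P (J + {#i#}) $ \<sigma> * pdy \<sigma> J F P) = 0"
      using pdy_high[OF o] by auto
  qed
  then show ?thesis unfolding fd_def by simp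
qed

lemma has_order_mono: "has_order k F \<Longrightarrow> k \<le> k' \<Longrightarrow> has_order k' F"
  unfolding has_order_def by (meson order_trans)

lemma has_order_comb: "has_order k F \<Longrightarrow> has_order k G \<Longrightarrow> has_order k (\<lambda>P. h (F P) (G P))"
  unfolding has_order_def by metis

lemma has_order_const: "has_order k (\<lambda>P. c)"
  unfolding has_order_def by simp

lemma has_order_sum: "(\<And>x. has_order k (F x)) \<Longrightarrow> has_order k (\<lambda>P. \<Sum>x\<in>S. F x P)"
  unfolding has_order_def by (metis (mono_tags, lifting) sum.cong)

lemma has_order_uniform:
  assumes "\<And>x::'a::finite. \<exists>k. has_order k (F x)"
  shows "\<exists>k. \<forall>x. has_order k (F x)"
proof -
  obtain kf where kf: "\<And>x. has_order (kf x) (F x)" using assms by metis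
  define k where "k = Max (range kf)"
  have "kf x \<le> k" for x unfolding k_def by (rule Max_ge) auto
  then show ?thesis using kf has_order_mono by blast
qed

section \<open>derivatives\<close>

lemma DERIV_deriv_real: "(f :: real \<Rightarrow> real) differentiable (at x) \<Longrightarrow> DERIV f x :> deriv f x"
  by (rule DERIV_deriv_iff_real_differentiable[THEN iffD2])

lemma deriv_add_real:
  "(f :: real \<Rightarrow> real) differentiable (at x) \<Longrightarrow> g differentiable (at x) \<Longrightarrow> deriv (\<lambda>t. f t + g t) x = deriv f x + deriv g x"
  by (rule DERIV_imp_deriv, rule DERIV_add) (simp_all add: DERIV_deriv_real)

lemma deriv_mult_real:
  "(f :: real \<Rightarrow> real) differentiable (at x) \<Longrightarrow> g differentiable (at x) \<Longrightarrow> deriv (\<lambda>t. f t * g t) x = deriv f x * g x + f x * deriv g x"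
proof -
  assume "f differentiable (at x)" "g differentiable (at x)"
  from DERIV_mult[OF DERIV_deriv_real[OF this(1)] DERIV_deriv_real[OF this(2)]]
  have "DERIV (\<lambda>t. f t * g t) x :> deriv f x * g x + f x * deriv g x" by (simp add: algebra_simps)
  then show ?thesis by (rule DERIV_imp_deriv)
qed

lemma deriv_cmult_real:
  "(f :: real \<Rightarrow> real) differentiable (at x) \<Longrightarrow> deriv (\<lambda>t. c * f t) x = c * deriv f x"
  by (rule DERIV_imp_deriv, rule DERIV_cmult) (simp_all add: DERIV_deriv_real)

lemma deriv_sum_real:
  "finite S \<Longrightarrow> (\<And>y. y \<in> S \<Longrightarrow> (f y :: real \<Rightarrow> real) differentiable (at x)) \<Longrightarrow> deriv (\<lambda>t. \<Sum>y\<in>S. f y t) x = (\<Sum>y\<in>S. deriv (f y) x)"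
  by (rule DERIV_imp_deriv, rule DERIV_sum) (simp_all add: DERIV_deriv_real)

lemma pdiff_point: "pdiff_on S F \<Longrightarrow> P \<in> S \<Longrightarrow> pdiff_on {P} F"
  unfolding pdiff_on_def by simp

lemma pdiff_add: "pdiff_on {P} F \<Longrightarrow> pdiff_on {P} G \<Longrightarrow> pdiff_on {P} (\<lambda>Q. F Q + G Q)"
  unfolding pdiff_on_def by (simp add: differentiable_add)

lemma pdiff_mult: "pdiff_on {P} F \<Longrightarrow> pdiff_on {P} G \<Longrightarrow> pdiff_on {P} (\<lambda>Q. F Q * G Q)"
  unfolding pdiff_on_def by (simp add: differentiable_mult)

lemma pdiff_cmult: "pdiff_on {P} F \<Longrightarrow> pdiff_on {P} (\<lambda>Q. c * F Q)"
  unfolding pdiff_on_def by (simp add: differentiable_mult)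

lemma pdiff_sum: "finite S \<Longrightarrow> (\<And>x. x \<in> S \<Longrightarrow> pdiff_on {P} (F x)) \<Longrightarrow> pdiff_on {P} (\<lambda>Q. \<Sum>x\<in>S. F x Q)"
  unfolding pdiff_on_def by (simp add: differentiable_sum)

lemma pdiff_const: "pdiff_on {P} (\<lambda>Q. c)"
  unfolding pdiff_on_def by simp

definition fo :: "(('n::{finite,linorder},'m::finite) jpt \<Rightarrow> real) \<Rightarrow> bool" where
  "fo F \<longleftrightarrow> (\<exists>k. has_order k F)"

lemma fo_add: "fo F \<Longrightarrow> fo G \<Longrightarrow> fo (\<lambda>Q. F Q + G Q)"
  unfolding fo_def by (metis has_order_comb has_order_mono max.cobounded1 max.cobounded2)

lemma fo_mult: "fo F \<Longrightarrow> fo G \<Longrightarrow> fo (\<lambda>Q. F Q * G Q)"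
  unfolding fo_def by (metis has_order_comb has_order_mono max.cobounded1 max.cobounded2)

lemma fo_cmult: "fo F \<Longrightarrow> fo (\<lambda>Q. c * F Q)"
  unfolding fo_def using has_order_comb[OF has_order_const] by blast

lemma fo_sum: "(\<And>x. fo (F (x::'a::finite))) \<Longrightarrow> fo (\<lambda>Q. \<Sum>x\<in>S. F x Q)"
  unfolding fo_def using has_order_uniform has_order_sum by metis

lemma fd_add:
  assumes "fo F" "fo G" "pdiff_on {P} F" "pdiff_on {P} G"
  shows "fd i (\<lambda>Q. F Q + G Q) P = fd i F P + fd i G P"
proof -
  obtain k where kF: "has_order k F" and kG: "has_order k G"
    using assms(1,2) unfolding fo_def by (metis has_order_mono max.cobounded1 max.cobounded2)
  have kS: "has_order k (\<lambda>Q. F Q + G Q)" using has_order_comb[OF kF kG] .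
  have px: "pdx i (\<lambda>Q. F Q + G Q) P = pdx i F P + pdx i G P"
    unfolding pdx_def using assms(3,4) unfolding pdiff_on_def by (simp add: deriv_add_real)
  have py: "pdy \<sigma> J (\<lambda>Q. F Q + G Q) P = pdy \<sigma> J F P + pdy \<sigma> J G P" for \<sigma> J
    unfolding pdy_def using assms(3,4) unfolding pdiff_on_def by (simp add: deriv_add_real)
  show ?thesis
    unfolding fd_alt[OF kF order_refl] fd_alt[OF kG order_refl] fd_alt[OF kS order_refl] px py
    by (simp add: sum.distrib algebra_simps)
qed

lemma fd_mult:
  assumes "fo F" "fo G" "pdiff_on {P} F" "pdiff_on {P} G"
  shows "fd i (\<lambda>Q. F Q * G Q) P = fd i F P * G P + F P * fd i G P"
proof -
  obtain k where kF: "has_order k F" and kG: "has_order k G"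
    using assms(1,2) unfolding fo_def by (metis has_order_mono max.cobounded1 max.cobounded2)
  have kS: "has_order k (\<lambda>Q. F Q * G Q)" using has_order_comb[OF kF kG] .
  have ux: "upd_x i (fst P $ i) P = P" by (simp add: upd_x_def vec_eq_iff prod_eq_iff)
  have uy: "upd_y \<sigma> J (snd P J $ \<sigma>) P = P" for \<sigma> J
  proof -
    have "(\<chi> \<nu>. if \<nu> = \<sigma> then snd P J $ \<sigma> else snd P J $ \<nu>) = snd P J" by (simp add: vec_eq_iff)
    then show ?thesis by (simp add: upd_y_def)
  qed
  have px: "pdx i (\<lambda>Q. F Q * G Q) P = pdx i F P * G P + F P * pdx i G P"
    unfolding pdx_def using assms(3,4) unfolding pdiff_on_def by (simp add: deriv_mult_real ux)
  have py: "pdy \<sigma> J (\<lambda>Q. F Q * G Q) P = pdy \<sigma> J F P * G P + F P * pdy \<sigma> J G P" for \<sigma> J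
    unfolding pdy_def using assms(3,4) unfolding pdiff_on_def by (simp add: deriv_mult_real uy)
  show ?thesis
    unfolding fd_alt[OF kF order_refl] fd_alt[OF kG order_refl] fd_alt[OF kS order_refl] px py
    by (simp add: sum.distrib algebra_simps sum_distrib_left sum_distrib_right)
qed

lemma fd_cmult:
  assumes "fo F" "pdiff_on {P} F"
  shows "fd i (\<lambda>Q. c * F Q) P = c * fd i F P"
proof -
  obtain k where kF: "has_order k F" using assms(1) unfolding fo_def by blast
  have kS: "has_order k (\<lambda>Q. c * F Q)" using has_order_comb[OF has_order_const kF] .
  have px: "pdx i (\<lambda>Q. c * F Q) P = c * pdx i F P"
    unfolding pdx_def using assms(2) unfolding pdiff_on_def by (simp add: deriv_cmult_real)
  have py: "pdy \<sigma> J (\<lambda>Q. c * F Q) P = c * pdy \<sigma> J F P" for \<sigma> J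
    unfolding pdy_def using assms(2) unfolding pdiff_on_def by (simp add: deriv_cmult_real)
  show ?thesis
    unfolding fd_alt[OF kF order_refl] fd_alt[OF kS order_refl] px py
    by (simp add: algebra_simps sum_distrib_left)
qed

lemma fd_sum:
  assumes "finite S" "\<And>x. fo (F x)" "\<And>x. x \<in> S \<Longrightarrow> pdiff_on {P} (F x)"
  shows "fd i (\<lambda>Q. \<Sum>x\<in>S. F x Q) P = (\<Sum>x\<in>S. fd i (F x) P)"
  using assms(1,3)
proof (induction S rule: finite_induct)
  case empty
  have "fd i (\<lambda>Q. 0) P = 0"
    unfolding fd_alt[OF has_order_const[of 0 0] order_refl] pdx_def pdy_def by (simp add: deriv_const)
  then show ?case by simp
next
  case (insert x S)
  have "fd i (\<lambda>Q. \<Sum>y\<in>insert x S. F y Q) P = fd i (\<lambda>Q. F x Q + (\<Sum>y\<in>S. F y Q)) P"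
    using insert(1,2) by simp
  also have "\<dots> = fd i (F x) P + fd i (\<lambda>Q. \<Sum>y\<in>S. F y Q) P"
  proof (rule fd_add)
    show "fo (F x)" by (rule assms(2))
    show "fo (\<lambda>Q. \<Sum>y\<in>S. F y Q)" unfolding fo_def
    proof -
      have "\<forall>y\<in>S. \<exists>k. has_order k (F y)" using assms(2) unfolding fo_def by blast
      then obtain kf where kf: "\<forall>y\<in>S. has_order (kf y) (F y)" by metis
      define k where "k = Max (kf ` S)"
      have "\<forall>y\<in>S. has_order k (F y)"
        using kf insert(1) has_order_mono unfolding k_def by (metis Max_ge finite_imageI imageI)
      then have "has_order k (\<lambda>Q. \<Sum>y\<in>S. F y Q)" unfolding has_order_def by (metis (mono_tags, lifting) sum.cong)
      then show "\<exists>k. has_order k (\<lambda>Q. \<Sum>y\<in>S. F y Q)" by blast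
    qed
    show "pdiff_on {P} (F x)" using insert by simp
    show "pdiff_on {P} (\<lambda>Q. \<Sum>y\<in>S. F y Q)" using insert by (intro pdiff_sum) auto
  qed
  also have "\<dots> = (\<Sum>y\<in>insert x S. fd i (F y) P)" using insert by simp
  finally show ?case .
qed


definition base :: "('n::{finite,linorder},'m::finite) jpt \<Rightarrow> (real^'n::{finite,linorder}) \<times> (real^'m::finite)" where
  "base P = (fst P, snd P {#})"

lemma jdom_base: "P \<in> jdom W \<longleftrightarrow> base P \<in> W"
  by (simp add: jdom_def base_def)

lemma upd_x_self: "upd_x i (fst P $ i) P = P"
  by (simp add: upd_x_def vec_eq_iff prod_eq_iff)

lemma upd_y_self: "upd_y \<sigma> J (snd P J $ \<sigma>) P = P"
proof -
  have "(\<chi> \<nu>. if \<nu> = \<sigma> then snd P J $ \<sigma> else snd P J $ \<nu>) = snd P J" by (simp add: vec_eq_iff)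
  then show ?thesis by (simp add: upd_y_def)
qed

lemma base_upd_x: "base (upd_x i t P) = base (upd_x i 0 P) + t *\<^sub>R (base (upd_x i 1 P) - base (upd_x i 0 P))"
  by (simp add: base_def upd_x_def vec_eq_iff prod_eq_iff)

lemma base_upd_y: "base (upd_y \<sigma> J t P) = base (upd_y \<sigma> J 0 P) + t *\<^sub>R (base (upd_y \<sigma> J 1 P) - base (upd_y \<sigma> J 0 P))"
  by (simp add: base_def upd_y_def vec_eq_iff prod_eq_iff)

lemma j1_upd_x: "j1proj (upd_x i t P) = j1proj (upd_x i 0 P) + t *\<^sub>R (j1proj (upd_x i 1 P) - j1proj (upd_x i 0 P))"
  by (simp add: j1proj_def upd_x_def vec_eq_iff prod_eq_iff)

lemma j1_upd_y: "j1proj (upd_y \<sigma> J t P) = j1proj (upd_y \<sigma> J 0 P) + t *\<^sub>R (j1proj (upd_y \<sigma> J 1 P) - j1proj (upd_y \<sigma> J 0 P))"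
  by (simp add: j1proj_def upd_y_def vec_eq_iff prod_eq_iff)

lemma diff_affine:
  fixes f :: "'a::real_normed_vector \<Rightarrow> real"
  assumes phi: "\<And>t. \<phi> t = a + t *\<^sub>R b" and f: "f differentiable (at (\<phi> t0))"
  shows "(\<lambda>t. f (\<phi> t)) differentiable (at t0)"
proof -
  have e: "\<phi> = (\<lambda>t. a + t *\<^sub>R b)" using phi by auto
  have "((\<lambda>t. a + t *\<^sub>R b) has_derivative (\<lambda>h. h *\<^sub>R b)) (at t0)"
    by (auto intro!: derivative_eq_intros)
  then have "(\<lambda>t. a + t *\<^sub>R b) differentiable (at t0)" by (rule differentiableI)
  from differentiable_chain_at[OF this] f show ?thesis by (simp add: e comp_def)
qed

lemma eventually_affine_open:
  fixes \<phi> :: "real \<Rightarrow> 'a::real_normed_vector"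
  assumes W: "open W" and phi: "\<And>t. \<phi> t = a + t *\<^sub>R b" and t0: "\<phi> t0 \<in> W"
  shows "eventually (\<lambda>t. \<phi> t \<in> W) (nhds t0)"
proof -
  have e: "\<phi> = (\<lambda>t. a + t *\<^sub>R b)" using phi by auto
  have "continuous_on UNIV \<phi>" unfolding e by (intro continuous_intros)
  then have "open (\<phi> -` W)" using W by (intro open_vimage)
  moreover have "t0 \<in> \<phi> -` W" using t0 by simp
  ultimately have "eventually (\<lambda>t. t \<in> \<phi> -` W) (nhds t0)" by (rule eventually_nhds_in_open)
  then show ?thesis by simp
qed

lemma deriv_local: "eventually (\<lambda>t. f t = g t) (nhds x) \<Longrightarrow> deriv f x = deriv g x"
proof -
  assume ev: "eventually (\<lambda>t. f t = g t) (nhds x)"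
  have "(\<lambda>D. DERIV f x :> D) = (\<lambda>D. DERIV g x :> D)"
    using DERIV_cong_ev[OF refl ev refl] by auto
  then show ?thesis unfolding deriv_def by simp
qed

lemma fd_local:
  assumes W: "open W" and P: "P \<in> jdom W" and F: "fo F" and G: "fo G"
    and eq: "\<And>Q. Q \<in> jdom W \<Longrightarrow> F Q = G Q"
  shows "fd i F P = fd i G P"
proof -
  obtain k where kF: "has_order k F" and kG: "has_order k G"
    using F G unfolding fo_def by (metis has_order_mono max.cobounded1 max.cobounded2)
  have px: "pdx i F P = pdx i G P" unfolding pdx_def
  proof (rule deriv_local)
    have "eventually (\<lambda>t. base (upd_x i t P) \<in> W) (nhds (fst P $ i))"
      by (rule eventually_affine_open[OF W base_upd_x]) (use P in \<open>simp add: upd_x_self jdom_base\<close>)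
    then show "eventually (\<lambda>t. F (upd_x i t P) = G (upd_x i t P)) (nhds (fst P $ i))"
      by (rule eventually_mono) (simp add: eq jdom_base)
  qed
  have py: "pdy \<sigma> J F P = pdy \<sigma> J G P" for \<sigma> J unfolding pdy_def
  proof (rule deriv_local)
    have "eventually (\<lambda>t. base (upd_y \<sigma> J t P) \<in> W) (nhds (snd P J $ \<sigma>))"
      by (rule eventually_affine_open[OF W base_upd_y]) (use P in \<open>simp add: upd_y_self jdom_base\<close>)
    then show "eventually (\<lambda>t. F (upd_y \<sigma> J t P) = G (upd_y \<sigma> J t P)) (nhds (snd P J $ \<sigma>))"
      by (rule eventually_mono) (simp add: eq jdom_base)
  qed
  show ?thesis unfolding fd_alt[OF kF order_refl] fd_alt[OF kG order_refl] px py ..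
qed

lemma j1proj_in: "P \<in> jdom W \<Longrightarrow> j1proj P \<in> j1dom W"
  by (simp add: jdom_def j1dom_def j1proj_def)

lemma pdiff_lift:
  assumes P: "P \<in> jdom W" and f: "\<And>z. z \<in> j1dom W \<Longrightarrow> f differentiable (at z)"
  shows "pdiff_on {P} (liftA f)"
  unfolding pdiff_on_def liftA_def
proof (intro ballI conjI allI)
  fix Q assume "Q \<in> {P}" then have Q: "Q = P" by simp
  have fj: "f differentiable (at (j1proj P))" using f j1proj_in[OF P] by simp
  fix i show "(\<lambda>t. f (j1proj (upd_x i t Q))) differentiable (at (fst Q $ i))"
    by (rule diff_affine[OF j1_upd_x]) (simp add: Q upd_x_self fj)
next
  fix Q assume "Q \<in> {P}" then have Q: "Q = P" by simp
  have fj: "f differentiable (at (j1proj P))" using f j1proj_in[OF P] by simp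
  fix \<sigma> J show "(\<lambda>t. f (j1proj (upd_y \<sigma> J t Q))) differentiable (at (snd Q J $ \<sigma>))"
    by (rule diff_affine[OF j1_upd_y]) (simp add: Q upd_y_self fj)
qed

lemma smooth_diff: "smooth_fun_on S f \<Longrightarrow> x \<in> S \<Longrightarrow> f differentiable (at x)"
  unfolding smooth_fun_on_def by (metis Ck_on.simps(2))

lemma Xi0_base: "Xi0 Xi \<sigma> Q = (\<lambda>z. Xi z $ \<sigma>) (base Q)"
  by (simp add: Xi0_def base_def)

lemma pdiff_Xi0:
  assumes P: "P \<in> jdom W" and Xi: "vert_field W Xi"
  shows "pdiff_on {P} (Xi0 Xi \<sigma>)"
  unfolding pdiff_on_def Xi0_base
proof (intro ballI conjI allI)
  fix Q assume "Q \<in> {P}" then have Q: "Q = P" by simp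
  have fj: "(\<lambda>z. Xi z $ \<sigma>) differentiable (at (base P))"
    using smooth_diff[of W "\<lambda>z. Xi z $ \<sigma>"] Xi P by (simp add: vert_field_def jdom_base)
  fix i show "(\<lambda>t. Xi (base (upd_x i t Q)) $ \<sigma>) differentiable (at (fst Q $ i))"
    using diff_affine[OF base_upd_x, of "\<lambda>z. Xi z $ \<sigma>"] fj by (simp add: Q upd_x_self)
next
  fix Q assume "Q \<in> {P}" then have Q: "Q = P" by simp
  have fj: "(\<lambda>z. Xi z $ \<sigma>) differentiable (at (base P))"
    using smooth_diff[of W "\<lambda>z. Xi z $ \<sigma>"] Xi P by (simp add: vert_field_def jdom_base)
  fix \<tau> J show "(\<lambda>t. Xi (base (upd_y \<tau> J t Q)) $ \<sigma>) differentiable (at (snd Q J $ \<tau>))"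
    using diff_affine[OF base_upd_y, of "\<lambda>z. Xi z $ \<sigma>"] fj by (simp add: Q upd_y_self)
qed

lemma has_order_lift: "has_order 1 (liftA f)"
  unfolding has_order_def liftA_def j1proj_def
proof (intro allI impI)
  fix P Q :: "('a::{finite,linorder},'b::finite) jpt"
  assume h: "fst P = fst Q \<and> (\<forall>J. size J \<le> 1 \<longrightarrow> snd P J = snd Q J)"
  then have "snd P {#} = snd Q {#}" "\<And>j. snd P {#j#} = snd Q {#j#}" by auto
  then show "f (fst P, snd P {#}, \<chi> \<sigma> j. snd P {#j#} $ \<sigma>) = f (fst Q, snd Q {#}, \<chi> \<sigma> j. snd Q {#j#} $ \<sigma>)"
    using h by simp
qed

lemma has_order_Xi0: "has_order 0 (Xi0 Xi \<sigma>)"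
  unfolding has_order_def Xi0_def by auto

lemma fo_lift: "fo (liftA f)" unfolding fo_def using has_order_lift by blast
lemma fo_Xi0: "fo (Xi0 Xi \<sigma>)" unfolding fo_def using has_order_Xi0 by blast




lemma antisym_add: "antisym_idx p f \<Longrightarrow> antisym_idx p g \<Longrightarrow> antisym_idx p (\<lambda>I. f I + g I)"
  unfolding antisym_idx_def by simp
lemma antisym_diff: "antisym_idx p f \<Longrightarrow> antisym_idx p g \<Longrightarrow> antisym_idx p (\<lambda>I. f I - g I)"
  unfolding antisym_idx_def by simp
lemma antisym_cmult: "antisym_idx p f \<Longrightarrow> antisym_idx p (\<lambda>I. c * f I)"
  unfolding antisym_idx_def by simp
lemma antisym_multc: "antisym_idx p f \<Longrightarrow> antisym_idx p (\<lambda>I. f I * c)"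
  unfolding antisym_idx_def by simp
lemma antisym_sum: "(\<And>x. antisym_idx p (\<lambda>I. F x I)) \<Longrightarrow> antisym_idx p (\<lambda>I. \<Sum>x\<in>S. F x I)"
  unfolding antisym_idx_def by (simp add: sum_negf)

lemma fo_sum_fin:
  assumes "finite S" "\<And>x. x \<in> S \<Longrightarrow> fo (F x)"
  shows "fo (\<lambda>Q. \<Sum>x\<in>S. F x Q)"
proof -
  have "\<forall>y\<in>S. \<exists>k. has_order k (F y)" using assms(2) unfolding fo_def by blast
  then obtain kf where kf: "\<forall>y\<in>S. has_order (kf y) (F y)" by metis
  define k where "k = Max (kf ` S)"
  have "\<forall>y\<in>S. has_order k (F y)"
    using kf assms(1) has_order_mono unfolding k_def by (metis Max_ge finite_imageI imageI)
  then have "has_order k (\<lambda>Q. \<Sum>y\<in>S. F y Q)" unfolding has_order_def by (metis (mono_tags, lifting) sum.cong)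
  then show ?thesis unfolding fo_def by blast
qed

lemma that_expand:
  "that A1 K \<sigma> = (\<lambda>Q. (1 / fact (length K)) * (\<Sum>\<rho>\<in>{\<rho>. \<rho> permutes {..<length K}}.
      of_int (sign \<rho>) * liftA (A1 (butlast (map (\<lambda>k. K ! \<rho> k) [0..<length K])) (last (map (\<lambda>k. K ! \<rho> k) [0..<length K])) \<sigma>) Q))"
  by (simp add: that_def alt_def fun_eq_iff)

lemma fo_that: "fo (that A1 K \<sigma>)"
  unfolding that_expand by (intro fo_cmult fo_sum_fin finite_permutations fo_lift) simp

lemma pdiff_that:
  assumes P: "P \<in> jdom W" and A1d: "\<And>I j \<sigma> z. z \<in> j1dom W \<Longrightarrow> A1 I j \<sigma> differentiable (at z)"
  shows "pdiff_on {P} (that A1 K \<sigma>)"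
  unfolding that_expand by (intro pdiff_cmult pdiff_sum finite_permutations pdiff_lift[OF P] A1d) simp_all

lemma fd_that:
  assumes P: "P \<in> jdom W" and A1d: "\<And>I j \<sigma> z. z \<in> j1dom W \<Longrightarrow> A1 I j \<sigma> differentiable (at z)"
  shows "fd l (that A1 K \<sigma>) P = alt (\<lambda>ls. fd l (liftA (A1 (butlast ls) (last ls) \<sigma>)) P) K"
proof -
  let ?S = "{\<rho>. \<rho> permutes {..<length K}}"
  let ?L = "\<lambda>\<rho>. map (\<lambda>k. K ! \<rho> k) [0..<length K]"
  have fin: "finite ?S" by (rule finite_permutations) simp
  have pd: "pdiff_on {P} (\<lambda>Q. of_int (sign \<rho>) * liftA (A1 (butlast (?L \<rho>)) (last (?L \<rho>)) \<sigma>) Q)" for \<rho>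
    by (intro pdiff_cmult pdiff_lift[OF P] A1d)
  have fo1: "fo (\<lambda>Q. of_int (sign \<rho>) * liftA (A1 (butlast (?L \<rho>)) (last (?L \<rho>)) \<sigma>) Q)" for \<rho>
    by (intro fo_cmult fo_lift)
  have "fd l (that A1 K \<sigma>) P = (1 / fact (length K)) *
      fd l (\<lambda>Q. \<Sum>\<rho>\<in>?S. of_int (sign \<rho>) * liftA (A1 (butlast (?L \<rho>)) (last (?L \<rho>)) \<sigma>) Q) P"
    unfolding that_expand
    by (rule fd_cmult, rule fo_sum_fin[OF fin fo1], rule pdiff_sum[OF fin pd])
  also have "fd l (\<lambda>Q. \<Sum>\<rho>\<in>?S. of_int (sign \<rho>) * liftA (A1 (butlast (?L \<rho>)) (last (?L \<rho>)) \<sigma>) Q) P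
     = (\<Sum>\<rho>\<in>?S. fd l (\<lambda>Q. of_int (sign \<rho>) * liftA (A1 (butlast (?L \<rho>)) (last (?L \<rho>)) \<sigma>) Q) P)"
    by (rule fd_sum[OF fin fo1 pd])
  also have "\<dots> = (\<Sum>\<rho>\<in>?S. of_int (sign \<rho>) * fd l (liftA (A1 (butlast (?L \<rho>)) (last (?L \<rho>)) \<sigma>)) P)"
    by (rule sum.cong[OF refl], rule fd_cmult[OF fo_lift pdiff_lift[OF P A1d]])
  finally show ?thesis by (simp add: alt_def)
qed

lemma fd_Tc:
  assumes P: "P \<in> jdom W" and A1d: "\<And>I j \<sigma> z. z \<in> j1dom W \<Longrightarrow> A1 I j \<sigma> differentiable (at z)"
    and Xi: "vert_field W Xi"
  shows "fd l (Tprime_coeff s A1 Xi K) P =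
     1 / (of_nat s + 1) * (\<Sum>\<sigma>\<in>UNIV. fd l (that A1 K \<sigma>) P * Xi0 Xi \<sigma> P + that A1 K \<sigma> P * Xi1 Xi \<sigma> l P)"
proof -
  have pd: "pdiff_on {P} (\<lambda>Q. that A1 K \<sigma> Q * Xi0 Xi \<sigma> Q)" for \<sigma>
    by (intro pdiff_mult pdiff_that[OF P A1d] pdiff_Xi0[OF P Xi])
  have fo1: "fo (\<lambda>Q. that A1 K \<sigma> Q * Xi0 Xi \<sigma> Q)" for \<sigma>
    by (intro fo_mult fo_that fo_Xi0)
  have "fd l (Tprime_coeff s A1 Xi K) P = 1 / (of_nat s + 1) * fd l (\<lambda>Q. \<Sum>\<sigma>\<in>UNIV. that A1 K \<sigma> Q * Xi0 Xi \<sigma> Q) P"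
    unfolding Tprime_coeff_def
    by (rule fd_cmult, rule fo_sum_fin[OF finite_class.finite_UNIV fo1], rule pdiff_sum[OF finite_class.finite_UNIV pd])
  also have "fd l (\<lambda>Q. \<Sum>\<sigma>\<in>UNIV. that A1 K \<sigma> Q * Xi0 Xi \<sigma> Q) P = (\<Sum>\<sigma>\<in>UNIV. fd l (\<lambda>Q. that A1 K \<sigma> Q * Xi0 Xi \<sigma> Q) P)"
    by (rule fd_sum[OF finite_class.finite_UNIV fo1 pd])
  also have "\<dots> = (\<Sum>\<sigma>\<in>UNIV. fd l (that A1 K \<sigma>) P * Xi0 Xi \<sigma> P + that A1 K \<sigma> P * Xi1 Xi \<sigma> l P)"
    by (rule sum.cong[OF refl], unfold Xi1_def,
        rule fd_mult[OF fo_that fo_Xi0 pdiff_that[OF P A1d] pdiff_Xi0[OF P Xi]])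
  finally show ?thesis .
qed


lemma antisym_that: "antisym_idx p (\<lambda>K. that A1 K \<sigma> P)"
  unfolding that_def by (rule alt_antisym)

lemma existence:
  assumes P: "P \<in> jdom W" and A1d: "\<And>I j \<sigma> z. z \<in> j1dom W \<Longrightarrow> A1 I j \<sigma> differentiable (at z)"
    and Xi: "vert_field W Xi"
  shows "Vrho s A0 A1 Xi P js = Eprime s A0 A1 Xi P js + Div (Suc s) (Tprime_coeff s A1 Xi) P js"
proof -
  let ?LS = "{K :: 'a list. length K = Suc s}"
  let ?L0 = "{I :: 'a list. length I = s}"
  define X0 where "X0 = (\<lambda>\<sigma>. Xi0 Xi \<sigma> P)"
  define X1 where "X1 = (\<lambda>\<sigma> l. Xi1 Xi \<sigma> l P)"
  define ft where "ft = (\<lambda>l K \<sigma>. fd l (that A1 K \<sigma>) P)"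
  define tt where "tt = (\<lambda>K \<sigma>. that A1 K \<sigma> P)"
  define g where "g = (\<lambda>l K. fd l (Tprime_coeff s A1 Xi K) P)"
  have g_eq: "g l K = 1 / (of_nat s + 1) * (\<Sum>\<sigma>\<in>UNIV. ft l K \<sigma> * X0 \<sigma> + tt K \<sigma> * X1 \<sigma> l)" for l K
    unfolding g_def ft_def tt_def X0_def X1_def by (rule fd_Tc[OF P A1d Xi])
  have anti_g: "antisym_idx (Suc s) (g l)" for l
  proof -
    have a1: "antisym_idx (Suc s) (\<lambda>K. ft l K \<sigma>)" for \<sigma>
    proof -
      have e: "(\<lambda>K. ft l K \<sigma>) = (\<lambda>K. alt (\<lambda>ls. fd l (liftA (A1 (butlast ls) (last ls) \<sigma>)) P) K)"
        unfolding ft_def by (rule ext, rule fd_that[OF P A1d])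
      show ?thesis unfolding e by (rule alt_antisym)
    qed
    have a2: "antisym_idx (Suc s) (\<lambda>K. tt K \<sigma>)" for \<sigma>
      unfolding tt_def by (rule antisym_that)
    have "antisym_idx (Suc s) (\<lambda>K. 1 / (of_nat s + 1) * (\<Sum>\<sigma>\<in>UNIV. ft l K \<sigma> * X0 \<sigma> + tt K \<sigma> * X1 \<sigma> l))"
      by (intro antisym_cmult antisym_sum antisym_add antisym_multc a1 a2)
    moreover have "g l = (\<lambda>K. 1 / (of_nat s + 1) * (\<Sum>\<sigma>\<in>UNIV. ft l K \<sigma> * X0 \<sigma> + tt K \<sigma> * X1 \<sigma> l))"
      by (rule ext, rule g_eq)
    ultimately show ?thesis by simp
  qed
  have "Div (Suc s) (Tprime_coeff s A1 Xi) P js = (\<Sum>K\<in>?LS. \<Sum>l\<in>UNIV. g l K * wedge_dx l (ds_idx K) js)"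
    unfolding Div_def g_def ..
  also have "\<dots> = (\<Sum>l\<in>UNIV. \<Sum>K\<in>?LS. g l K * wedge_dx l (ds_idx K) js)" by (rule sum.swap)
  also have "\<dots> = (\<Sum>l\<in>UNIV. of_nat (Suc s) * (\<Sum>I\<in>?L0. g l (I @ [l]) * ds_idx I js))"
    by (rule sum.cong[OF refl], rule wedge_lemma[OF anti_g])
  also have "\<dots> = (\<Sum>I\<in>?L0. (\<Sum>l\<in>UNIV. of_nat (Suc s) * g l (I @ [l])) * ds_idx I js)"
    by (simp add: sum_distrib_left sum_distrib_right sum.swap[of _ UNIV] mult.assoc)
  finally have D: "Div (Suc s) (Tprime_coeff s A1 Xi) P js = (\<Sum>I\<in>?L0. (\<Sum>l\<in>UNIV. of_nat (Suc s) * g l (I @ [l])) * ds_idx I js)" .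
  have coef: "(\<Sum>l\<in>UNIV. of_nat (Suc s) * g l (I @ [l]))
      = (\<Sum>\<sigma>\<in>UNIV. \<Sum>l\<in>UNIV. ft l (I @ [l]) \<sigma> * X0 \<sigma>) + (\<Sum>\<sigma>\<in>UNIV. \<Sum>l\<in>UNIV. tt (I @ [l]) \<sigma> * X1 \<sigma> l)" for I
  proof -
    have "(\<Sum>l\<in>UNIV. of_nat (Suc s) * g l (I @ [l])) = (\<Sum>l\<in>UNIV. \<Sum>\<sigma>\<in>UNIV. ft l (I @ [l]) \<sigma> * X0 \<sigma> + tt (I @ [l]) \<sigma> * X1 \<sigma> l)"
    proof (rule sum.cong[OF refl])
      fix l
      have "(1 + real s) / (real s + 1) = 1" by simp
      then show "of_nat (Suc s) * g l (I @ [l]) = (\<Sum>\<sigma>\<in>UNIV. ft l (I @ [l]) \<sigma> * X0 \<sigma> + tt (I @ [l]) \<sigma> * X1 \<sigma> l)"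
        unfolding g_eq by (simp add: field_simps)
    qed
    also have "\<dots> = (\<Sum>\<sigma>\<in>UNIV. \<Sum>l\<in>UNIV. ft l (I @ [l]) \<sigma> * X0 \<sigma> + tt (I @ [l]) \<sigma> * X1 \<sigma> l)" by (rule sum.swap)
    finally show ?thesis by (simp add: sum.distrib)
  qed
  have "Vrho s A0 A1 Xi P js = (\<Sum>I\<in>?L0. ((\<Sum>\<sigma>\<in>UNIV. liftA (A0 I \<sigma>) P * X0 \<sigma>) + (\<Sum>\<sigma>\<in>UNIV. \<Sum>j\<in>UNIV. liftA (A1 I j \<sigma>) P * X1 \<sigma> j)) * ds_idx I js)"
    unfolding Vrho_def hform_def X0_def X1_def ..
  also have "\<dots> = (\<Sum>I\<in>?L0. ((\<Sum>\<sigma>\<in>UNIV. (liftA (A0 I \<sigma>) P - (\<Sum>i\<in>UNIV. ft i (I @ [i]) \<sigma>)) * X0 \<sigma>) +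
       (\<Sum>\<sigma>\<in>UNIV. \<Sum>j\<in>UNIV. (liftA (A1 I j \<sigma>) P - tt (I @ [j]) \<sigma>) * X1 \<sigma> j)) * ds_idx I js
     + (\<Sum>l\<in>UNIV. of_nat (Suc s) * g l (I @ [l])) * ds_idx I js)"
  proof (rule sum.cong[OF refl])
    fix I :: "'a list"
    show "((\<Sum>\<sigma>\<in>UNIV. liftA (A0 I \<sigma>) P * X0 \<sigma>) + (\<Sum>\<sigma>\<in>UNIV. \<Sum>j\<in>UNIV. liftA (A1 I j \<sigma>) P * X1 \<sigma> j)) * ds_idx I js =
      ((\<Sum>\<sigma>\<in>UNIV. (liftA (A0 I \<sigma>) P - (\<Sum>i\<in>UNIV. ft i (I @ [i]) \<sigma>)) * X0 \<sigma>) +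
       (\<Sum>\<sigma>\<in>UNIV. \<Sum>j\<in>UNIV. (liftA (A1 I j \<sigma>) P - tt (I @ [j]) \<sigma>) * X1 \<sigma> j)) * ds_idx I js
     + (\<Sum>l\<in>UNIV. of_nat (Suc s) * g l (I @ [l])) * ds_idx I js"
      unfolding coef by (simp add: algebra_simps sum_subtractf sum.distrib sum_distrib_left sum_distrib_right)
  qed
  also have "\<dots> = Eprime s A0 A1 Xi P js + Div (Suc s) (Tprime_coeff s A1 Xi) P js"
    unfolding D Eprime_def hform_def ft_def tt_def X0_def X1_def by (simp add: sum.distrib)
  finally show ?thesis .
qed


lemma reduced_part: "reduced1 S s (\<lambda>I j \<sigma> P. liftA (A1 I j \<sigma>) P - that A1 (I @ [j]) \<sigma> P)"
  unfolding reduced1_def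
proof (intro allI ballI impI)
  fix I :: "'a list" and j \<sigma> P assume I: "length I = s"
  have c: "alt (\<lambda>ks. that A1 (butlast ks @ [last ks]) \<sigma> P) (I @ [j]) = alt (\<lambda>ks. that A1 ks \<sigma> P) (I @ [j])"
  proof (rule alt_cong)
    fix L :: "'a list" assume "length L = length (I @ [j])"
    then have "L \<noteq> []" by auto
    then show "that A1 (butlast L @ [last L]) \<sigma> P = that A1 L \<sigma> P" by simp
  qed
  have "alt (\<lambda>ks. that A1 ks \<sigma> P) (I @ [j]) = that A1 (I @ [j]) \<sigma> P"
    by (rule alt_of_antisym[OF antisym_that]) simp
  then show "alt (\<lambda>ks. liftA (A1 (butlast ks) (last ks) \<sigma>) P - that A1 (butlast ks @ [last ks]) \<sigma> P) (I @ [j]) = 0"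
    using c by (simp add: alt_diff that_def)
qed

section \<open>Special vertical fields\<close>

lemma Ck_const: "Ck_on k S (\<lambda>x. c)"
proof (induction k arbitrary: c)
  case 0 then show ?case by simp
next
  case (Suc k)
  have "frechet_derivative (\<lambda>x. c) (at x) = (\<lambda>h. 0)" for x
    by (rule frechet_derivative_at[OF has_derivative_const, symmetric])
  then have "(\<lambda>x. frechet_derivative (\<lambda>x. c) (at x) v) = (\<lambda>x. 0)" for v by simp
  then show ?case using Suc by simp
qed

lemma Ck_lin: assumes "bounded_linear l" shows "Ck_on k S (\<lambda>x. l x + c)"
proof (cases k)
  case 0 then show ?thesis using assms by (simp add: continuous_on_add linear_continuous_on)
next
  case (Suc k')
  have d: "((\<lambda>x. l x + c) has_derivative l) (at x)" for x
    using bounded_linear.has_derivative[OF assms has_derivative_ident] by (auto intro!: derivative_eq_intros)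
  then have "frechet_derivative (\<lambda>x. l x + c) (at x) = l" for x
    by (rule frechet_derivative_at[symmetric])
  then have "(\<lambda>x. frechet_derivative (\<lambda>x. l x + c) (at x) v) = (\<lambda>x. l v)" for v by simp
  moreover have "(\<lambda>x. l x + c) differentiable (at x)" for x using d by (rule differentiableI)
  ultimately show ?thesis using Suc by (simp add: Ck_const)
qed

definition XiS :: "(real^'n::{finite,linorder}) \<Rightarrow> 'm::finite \<Rightarrow> 'n::{finite,linorder} \<Rightarrow> (real^'n::{finite,linorder}) \<times> (real^'m::finite) \<Rightarrow> real^'m::finite" where
  "XiS x0 \<sigma>0 j0 = (\<lambda>z. \<chi> \<sigma>. if \<sigma> = \<sigma>0 then fst z $ j0 - x0 $ j0 else 0)"

lemma vert_XiS: "vert_field W (XiS x0 \<sigma>0 j0)"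
  unfolding vert_field_def smooth_fun_on_def
proof (intro allI)
  fix \<sigma> k
  show "Ck_on k W (\<lambda>z. XiS x0 \<sigma>0 j0 z $ \<sigma>)"
  proof (cases "\<sigma> = \<sigma>0")
    case True
    have "(\<lambda>z. XiS x0 \<sigma>0 j0 z $ \<sigma>) = (\<lambda>z. fst z $ j0 + (- x0 $ j0))" using True by (simp add: XiS_def fun_eq_iff)
    then show ?thesis using Ck_lin[OF bounded_linear_compose[OF bounded_linear_vec_nth[of j0] bounded_linear_fst], of k W "- x0 $ j0"]
      by simp
  next
    case False
    then have "(\<lambda>z. XiS x0 \<sigma>0 j0 z $ \<sigma>) = (\<lambda>z. 0)" by (simp add: XiS_def fun_eq_iff)
    then show ?thesis using Ck_const by simp
  qed
qed

lemma Xi0_XiS: "Xi0 (XiS x0 \<sigma>0 j0) \<sigma> Q = (if \<sigma> = \<sigma>0 then fst Q $ j0 - x0 $ j0 else 0)"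
  by (simp add: Xi0_def XiS_def)

lemma fst_upd_y: "fst (upd_y \<sigma> J t P) = fst P"
  by (simp add: upd_y_def)

lemma Xi1_XiS: "Xi1 (XiS x0 \<sigma>0 j0) \<sigma> j P = (if \<sigma> = \<sigma>0 \<and> j = j0 then 1 else 0)"
proof -
  have py: "pdy \<tau> J (Xi0 (XiS x0 \<sigma>0 j0) \<sigma>) P = 0" for \<tau> J
    unfolding pdy_def Xi0_XiS fst_upd_y by simp
  have px: "pdx j (Xi0 (XiS x0 \<sigma>0 j0) \<sigma>) P = (if \<sigma> = \<sigma>0 \<and> j = j0 then 1 else 0)"
  proof (cases "\<sigma> = \<sigma>0 \<and> j = j0")
    case True
    have "(\<lambda>t. Xi0 (XiS x0 \<sigma>0 j0) \<sigma> (upd_x j t P)) = (\<lambda>t. t - x0 $ j0)"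
      using True by (simp add: Xi0_XiS upd_x_def fun_eq_iff)
    moreover have "deriv (\<lambda>t. t - x0 $ j0) x = 1" for x
      by (rule DERIV_imp_deriv) (auto intro!: derivative_eq_intros)
    ultimately show ?thesis unfolding pdx_def using True by simp
  next
    case False
    have "(\<lambda>t. Xi0 (XiS x0 \<sigma>0 j0) \<sigma> (upd_x j t P)) = (\<lambda>t. (if \<sigma> = \<sigma>0 then fst P $ j0 - x0 $ j0 else 0))"
      using False by (auto simp: Xi0_XiS upd_x_def fun_eq_iff)
    then show ?thesis unfolding pdx_def using False by (simp add: deriv_const)
  qed
  show ?thesis unfolding Xi1_def fd_alt[OF has_order_Xi0 order_refl] px py by simp
qed


lemma delta0: "(\<Sum>j\<in>UNIV. g j * (if j = j0 then 1 else 0)) = (g (j0 :: 'b::finite) :: real)"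
proof -
  have "(\<Sum>j\<in>UNIV. g j * (if j = j0 then 1 else 0)) = (\<Sum>j\<in>UNIV. if j = j0 then g j else 0)"
    by (rule sum.cong) auto
  also have "\<dots> = g j0" by (simp add: sum.delta)
  finally show ?thesis .
qed

lemma delta2: "(\<Sum>\<sigma>\<in>UNIV. \<Sum>j\<in>UNIV. f \<sigma> j * (if \<sigma> = \<sigma>0 \<and> j = j0 then 1 else 0)) = (f (\<sigma>0 :: 'a::finite) (j0 :: 'b::finite) :: real)"
proof -
  have "(\<Sum>\<sigma>\<in>UNIV. \<Sum>j\<in>UNIV. f \<sigma> j * (if \<sigma> = \<sigma>0 \<and> j = j0 then 1 else 0))
      = (\<Sum>\<sigma>\<in>UNIV. (\<Sum>j\<in>UNIV. f \<sigma> j * (if j = j0 then 1 else 0)) * (if \<sigma> = \<sigma>0 then 1 else 0))"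
  proof -
    have "(\<Sum>\<sigma>\<in>UNIV. \<Sum>j\<in>UNIV. f \<sigma> j * (if \<sigma> = \<sigma>0 \<and> j = j0 then 1 else 0))
      = (\<Sum>\<sigma>\<in>UNIV. \<Sum>j\<in>UNIV. f \<sigma> j * (if j = j0 then 1 else 0) * (if \<sigma> = \<sigma>0 then 1 else 0))"
      by (intro sum.cong refl) simp
    also have "\<dots> = (\<Sum>\<sigma>\<in>UNIV. (\<Sum>j\<in>UNIV. f \<sigma> j * (if j = j0 then 1 else 0)) * (if \<sigma> = \<sigma>0 then 1 else 0))"
      by (simp only: sum_distrib_right)
    finally show ?thesis .
  qed
  also have "\<dots> = f \<sigma>0 j0" by (simp only: delta0)
  finally show ?thesis .
qed

lemma delta1: "(\<Sum>\<sigma>\<in>UNIV. f \<sigma> * (if \<sigma> = \<sigma>0 \<and> l = j0 then 1 else 0)) = (if l = j0 then f (\<sigma>0 :: 'a::finite) else (0::real))"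
proof -
  have "(\<Sum>\<sigma>\<in>UNIV. f \<sigma> * (if \<sigma> = \<sigma>0 \<and> l = j0 then 1 else 0)) = (\<Sum>\<sigma>\<in>UNIV. if \<sigma> = \<sigma>0 then (if l = j0 then f \<sigma> else 0) else 0)"
    by (rule sum.cong[OF refl]) auto
  also have "\<dots> = (if l = j0 then f \<sigma>0 else 0)" by (cases "l = j0") (simp_all add: sum.delta sum.delta')
  finally show ?thesis .
qed

lemma uniq_step1:
  fixes W :: "((real^'n::{finite,linorder}) \<times> (real^'m::finite)) set"
    and A0 :: "'n::{finite,linorder} list \<Rightarrow> 'm::finite \<Rightarrow> (real^'n::{finite,linorder}) \<times> (real^'m) \<times> (real^'n::{finite,linorder}^'m) \<Rightarrow> real"
    and A1 :: "'n::{finite,linorder} list \<Rightarrow> 'n::{finite,linorder} \<Rightarrow> 'm::finite \<Rightarrow> (real^'n::{finite,linorder}) \<times> (real^'m) \<times> (real^'n::{finite,linorder}^'m) \<Rightarrow> real"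
    and e0 :: "'n::{finite,linorder} list \<Rightarrow> 'm::finite \<Rightarrow> ('n,'m) jpt \<Rightarrow> real"
    and e1 :: "'n::{finite,linorder} list \<Rightarrow> 'n::{finite,linorder} \<Rightarrow> 'm::finite \<Rightarrow> ('n,'m) jpt \<Rightarrow> real"
    and t :: "'n::{finite,linorder} list \<Rightarrow> 'm::finite \<Rightarrow> ('n,'m) jpt \<Rightarrow> real"
  assumes sn: "s \<le> CARD('n)"
    and A1anti: "\<And>j \<sigma> z. z \<in> j1dom W \<Longrightarrow> antisym_idx s (\<lambda>I. A1 I j \<sigma> z)"
    and e1anti: "\<forall>j \<sigma>. \<forall>P\<in>jdom W. antisym_idx s (\<lambda>I. e1 I j \<sigma> P)"
    and tfo: "\<forall>K \<sigma>. \<exists>k. has_order k (t K \<sigma>)"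
    and tpd: "\<forall>K \<sigma>. pdiff_on (jdom W) (t K \<sigma>)"
    and tanti: "\<forall>\<sigma>. \<forall>P\<in>jdom W. antisym_idx (Suc s) (\<lambda>K. t K \<sigma> P)"
    and H: "\<forall>Xi. vert_field W Xi \<longrightarrow> (\<forall>P\<in>jdom W.
              Vrho s A0 A1 Xi P = (\<lambda>js. vm1 s e0 e1 Xi P js + Div (Suc s) (vm0_coeff (Suc s) t Xi) P js))"
    and P: "P \<in> jdom W" and I: "length I = s"
  shows "liftA (A1 I j0 \<sigma>0) P - 1 / fact s * e1 I j0 \<sigma>0 P - 1 / fact s * t (I @ [j0]) \<sigma>0 P = 0"
proof -
  let ?LS = "{K :: 'n list. length K = Suc s}"
  let ?L0 = "{I :: 'n list. length I = s}"
  define Xi where "Xi = XiS (fst P) \<sigma>0 j0"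
  have vXi: "vert_field W Xi" unfolding Xi_def by (rule vert_XiS)
  have X0: "Xi0 Xi \<sigma> P = 0" for \<sigma> unfolding Xi_def Xi0_XiS by simp
  have X1: "Xi1 Xi \<sigma> j P = (if \<sigma> = \<sigma>0 \<and> j = j0 then 1 else 0)" for \<sigma> j unfolding Xi_def by (rule Xi1_XiS)
  have Hj: "Vrho s A0 A1 Xi P js = vm1 s e0 e1 Xi P js + Div (Suc s) (vm0_coeff (Suc s) t Xi) P js" for js
  proof -
    have h2: "Vrho s A0 A1 Xi P = (\<lambda>js. vm1 s e0 e1 Xi P js + Div (Suc s) (vm0_coeff (Suc s) t Xi) P js)"
      using H vXi P by blast
    show ?thesis using fun_cong[OF h2, of js] by simp
  qed
  have V: "Vrho s A0 A1 Xi P js = (\<Sum>I\<in>?L0. liftA (A1 I j0 \<sigma>0) P * ds_idx I js)" for js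
    unfolding Vrho_def hform_def X0 X1 delta2 by simp
  have M: "vm1 s e0 e1 Xi P js = (\<Sum>I\<in>?L0. (1 / fact s * e1 I j0 \<sigma>0 P) * ds_idx I js)" for js
    unfolding vm1_def hform_def X0 X1 delta2 by simp
  have fdv: "fd l (vm0_coeff (Suc s) t Xi K) P = 1 / fact (Suc s) * (if l = j0 then t K \<sigma>0 P else 0)" for l K
  proof -
    have pdt: "pdiff_on {P} (t K \<sigma>)" for \<sigma> using pdiff_point tpd P by blast
    have fot: "fo (t K \<sigma>)" for \<sigma> using tfo unfolding fo_def by blast
    have pd: "pdiff_on {P} (\<lambda>Q. t K \<sigma> Q * Xi0 Xi \<sigma> Q)" for \<sigma>
      by (intro pdiff_mult pdt pdiff_Xi0[OF P vXi])
    have fo1: "fo (\<lambda>Q. t K \<sigma> Q * Xi0 Xi \<sigma> Q)" for \<sigma>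
      by (intro fo_mult fot fo_Xi0)
    have "fd l (vm0_coeff (Suc s) t Xi K) P = 1 / fact (Suc s) * fd l (\<lambda>Q. \<Sum>\<sigma>\<in>UNIV. t K \<sigma> Q * Xi0 Xi \<sigma> Q) P"
      unfolding vm0_coeff_def
      by (rule fd_cmult, rule fo_sum_fin[OF finite_class.finite_UNIV fo1], rule pdiff_sum[OF finite_class.finite_UNIV pd])
    also have "fd l (\<lambda>Q. \<Sum>\<sigma>\<in>UNIV. t K \<sigma> Q * Xi0 Xi \<sigma> Q) P = (\<Sum>\<sigma>\<in>UNIV. fd l (\<lambda>Q. t K \<sigma> Q * Xi0 Xi \<sigma> Q) P)"
      by (rule fd_sum[OF finite_class.finite_UNIV fo1 pd])
    also have "\<dots> = (\<Sum>\<sigma>\<in>UNIV. t K \<sigma> P * (if \<sigma> = \<sigma>0 \<and> l = j0 then 1 else 0))"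
    proof (rule sum.cong[OF refl])
      fix \<sigma>
      have "fd l (\<lambda>Q. t K \<sigma> Q * Xi0 Xi \<sigma> Q) P = fd l (t K \<sigma>) P * Xi0 Xi \<sigma> P + t K \<sigma> P * fd l (Xi0 Xi \<sigma>) P"
        by (rule fd_mult[OF fot fo_Xi0 pdt pdiff_Xi0[OF P vXi]])
      also have "\<dots> = t K \<sigma> P * (if \<sigma> = \<sigma>0 \<and> l = j0 then 1 else 0)"
        using X0 X1 unfolding Xi1_def by simp
      finally show "fd l (\<lambda>Q. t K \<sigma> Q * Xi0 Xi \<sigma> Q) P = t K \<sigma> P * (if \<sigma> = \<sigma>0 \<and> l = j0 then 1 else 0)" .
    qed
    also have "\<dots> = (if l = j0 then t K \<sigma>0 P else 0)" by (rule delta1)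
    finally show ?thesis .
  qed
  have antiT: "antisym_idx (Suc s) (\<lambda>K. 1 / fact (Suc s) * t K \<sigma>0 P)"
    by (rule antisym_cmult) (use tanti P in blast)
  have D: "Div (Suc s) (vm0_coeff (Suc s) t Xi) P js
      = of_nat (Suc s) * (\<Sum>I\<in>?L0. (1 / fact (Suc s) * t (I @ [j0]) \<sigma>0 P) * ds_idx I js)" for js
  proof -
    have "Div (Suc s) (vm0_coeff (Suc s) t Xi) P js = (\<Sum>K\<in>?LS. (1 / fact (Suc s) * t K \<sigma>0 P) * wedge_dx j0 (ds_idx K) js)"
      unfolding Div_def fdv
    proof (rule sum.cong[OF refl])
      fix K
      show "(\<Sum>l\<in>UNIV. 1 / fact (Suc s) * (if l = j0 then t K \<sigma>0 P else 0) * wedge_dx l (ds_idx K) js)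
          = 1 / fact (Suc s) * t K \<sigma>0 P * wedge_dx j0 (ds_idx K) js"
      proof -
        have "(\<Sum>l\<in>UNIV. 1 / fact (Suc s) * (if l = j0 then t K \<sigma>0 P else 0) * wedge_dx l (ds_idx K) js)
          = (\<Sum>l\<in>UNIV. if l = j0 then 1 / fact (Suc s) * t K \<sigma>0 P * wedge_dx l (ds_idx K) js else 0)"
          by (rule sum.cong[OF refl]) simp
        also have "\<dots> = 1 / fact (Suc s) * t K \<sigma>0 P * wedge_dx j0 (ds_idx K) js"
          by (simp add: sum.delta sum.delta')
        finally show ?thesis .
      qed
    qed
    also have "\<dots> = of_nat (Suc s) * (\<Sum>I\<in>?L0. (1 / fact (Suc s) * t (I @ [j0]) \<sigma>0 P) * ds_idx I js)"
      by (rule wedge_lemma[OF antiT])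
    finally show ?thesis .
  qed
  define f where "f = (\<lambda>I. liftA (A1 I j0 \<sigma>0) P - 1 / fact s * e1 I j0 \<sigma>0 P - 1 / fact s * t (I @ [j0]) \<sigma>0 P)"
  have c1: "of_nat (Suc s) * (1 / fact (Suc s)) = (1 / fact s :: real)"
  proof -
    have "fact (Suc s) = (of_nat (Suc s) * fact s :: real)" by (rule fact_Suc)
    moreover have "(fact s :: real) \<noteq> 0" by simp
    ultimately show ?thesis by (simp del: of_nat_Suc)
  qed
  have z: "(\<Sum>I\<in>?L0. f I * ds_idx I js) = 0" for js
  proof -
    have "(\<Sum>I\<in>?L0. f I * ds_idx I js) = Vrho s A0 A1 Xi P js - vm1 s e0 e1 Xi P js
        - (\<Sum>I\<in>?L0. (1 / fact s * t (I @ [j0]) \<sigma>0 P) * ds_idx I js)"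
    proof -
      have "(\<Sum>I\<in>?L0. f I * ds_idx I js) = (\<Sum>I\<in>?L0. liftA (A1 I j0 \<sigma>0) P * ds_idx I js
          - (1 / fact s * e1 I j0 \<sigma>0 P) * ds_idx I js - (1 / fact s * t (I @ [j0]) \<sigma>0 P) * ds_idx I js)"
        by (rule sum.cong[OF refl]) (simp add: f_def left_diff_distrib)
      then show ?thesis unfolding V M by (simp only: sum_subtractf)
    qed
    also have "(\<Sum>I\<in>?L0. (1 / fact s * t (I @ [j0]) \<sigma>0 P) * ds_idx I js) = Div (Suc s) (vm0_coeff (Suc s) t Xi) P js"
    proof -
      have c2: "of_nat (Suc s) * ((1 / fact (Suc s) * x) * y) = (1 / fact s * x) * y" for x y :: real
        by (simp only: mult.assoc[symmetric] c1)
      show ?thesis unfolding D sum_distrib_left by (rule sum.cong[OF refl]) (simp only: c2)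
    qed
    finally show ?thesis using Hj[of js] by linarith
  qed
  have anti_f: "antisym_idx s f"
  proof -
    have a1: "antisym_idx s (\<lambda>I. liftA (A1 I j0 \<sigma>0) P)"
      unfolding liftA_def by (rule A1anti[OF j1proj_in[OF P]])
    have a2: "antisym_idx s (\<lambda>I. e1 I j0 \<sigma>0 P)" using e1anti P by blast
    have a3: "antisym_idx s (\<lambda>I. t (I @ [j0]) \<sigma>0 P)"
      by (rule antisym_snoc) (use tanti P in blast)
    show ?thesis unfolding f_def by (intro antisym_diff antisym_cmult a1 a2 a3)
  qed
  show ?thesis using hform_coeff_zero[OF anti_f sn z I] unfolding f_def .
qed



lemma uniq_step2:
  fixes W :: "((real^'n::{finite,linorder}) \<times> (real^'m::finite)) set"
    and A0 :: "'n::{finite,linorder} list \<Rightarrow> 'm::finite \<Rightarrow> (real^'n::{finite,linorder}) \<times> (real^'m) \<times> (real^'n::{finite,linorder}^'m) \<Rightarrow> real"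
    and A1 :: "'n::{finite,linorder} list \<Rightarrow> 'n::{finite,linorder} \<Rightarrow> 'm::finite \<Rightarrow> (real^'n::{finite,linorder}) \<times> (real^'m) \<times> (real^'n::{finite,linorder}^'m) \<Rightarrow> real"
    and e0 :: "'n::{finite,linorder} list \<Rightarrow> 'm::finite \<Rightarrow> ('n,'m) jpt \<Rightarrow> real"
    and e1 :: "'n::{finite,linorder} list \<Rightarrow> 'n::{finite,linorder} \<Rightarrow> 'm::finite \<Rightarrow> ('n,'m) jpt \<Rightarrow> real"
    and t :: "'n::{finite,linorder} list \<Rightarrow> 'm::finite \<Rightarrow> ('n,'m) jpt \<Rightarrow> real"
  assumes sn: "s \<le> CARD('n)"
    and A1anti: "\<And>j \<sigma> z. z \<in> j1dom W \<Longrightarrow> antisym_idx s (\<lambda>I. A1 I j \<sigma> z)"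
    and e1anti: "\<forall>j \<sigma>. \<forall>P\<in>jdom W. antisym_idx s (\<lambda>I. e1 I j \<sigma> P)"
    and tfo: "\<forall>K \<sigma>. \<exists>k. has_order k (t K \<sigma>)"
    and tpd: "\<forall>K \<sigma>. pdiff_on (jdom W) (t K \<sigma>)"
    and tanti: "\<forall>\<sigma>. \<forall>P\<in>jdom W. antisym_idx (Suc s) (\<lambda>K. t K \<sigma> P)"
    and H: "\<forall>Xi. vert_field W Xi \<longrightarrow> (\<forall>P\<in>jdom W.
              Vrho s A0 A1 Xi P = (\<lambda>js. vm1 s e0 e1 Xi P js + Div (Suc s) (vm0_coeff (Suc s) t Xi) P js))"
    and red: "reduced1 (jdom W) s e1"
    and P: "P \<in> jdom W" and K: "length K = Suc s"
  shows "t K \<sigma>0 P = fact s * that A1 K \<sigma>0 P"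
proof -
  define Fk where "Fk = (\<lambda>ks. (liftA (A1 (butlast ks) (last ks) \<sigma>0) P - 1 / fact s * e1 (butlast ks) (last ks) \<sigma>0 P)
      - 1 / fact s * t (butlast ks @ [last ks]) \<sigma>0 P)"
  have "alt Fk K = alt (\<lambda>ks. 0) K"
  proof (rule alt_cong)
    fix L :: "'n list" assume L: "length L = length K"
    then have "length (butlast L) = s" using K by simp
    from uniq_step1[OF sn A1anti e1anti tfo tpd tanti H P this, of "last L" \<sigma>0]
    show "Fk L = 0" unfolding Fk_def by simp
  qed
  then have z: "alt Fk K = 0" by (simp add: alt_zero)
  have a1: "alt (\<lambda>ks. liftA (A1 (butlast ks) (last ks) \<sigma>0) P) K = that A1 K \<sigma>0 P"
    by (simp add: that_def)
  have Kne: "K = butlast K @ [last K]" using K by (metis append_butlast_last_id list.size(3) nat.distinct(1))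
  have a2: "alt (\<lambda>ks. e1 (butlast ks) (last ks) \<sigma>0 P) K = 0"
  proof -
    have "length (butlast K) = s" using K by simp
    then have "alt (\<lambda>ks. e1 (butlast ks) (last ks) \<sigma>0 P) (butlast K @ [last K]) = 0"
      using red P unfolding reduced1_def by blast
    then show ?thesis using Kne by simp
  qed
  have a3: "alt (\<lambda>ks. t (butlast ks @ [last ks]) \<sigma>0 P) K = t K \<sigma>0 P"
  proof -
    have "alt (\<lambda>ks. t (butlast ks @ [last ks]) \<sigma>0 P) K = alt (\<lambda>ks. t ks \<sigma>0 P) K"
    proof (rule alt_cong)
      fix L :: "'n list" assume "length L = length K"
      then have "L \<noteq> []" using K by auto
      then show "t (butlast L @ [last L]) \<sigma>0 P = t L \<sigma>0 P" by simp
    qed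
    also have "\<dots> = t K \<sigma>0 P" by (rule alt_of_antisym[OF _ K]) (use tanti P in blast)
    finally show ?thesis .
  qed
  have "alt Fk K = that A1 K \<sigma>0 P - 1 / fact s * 0 - 1 / fact s * t K \<sigma>0 P"
    unfolding Fk_def alt_diff alt_cmult a1 a2 a3 ..
  then have "that A1 K \<sigma>0 P - 1 / fact s * t K \<sigma>0 P = 0" using z by simp
  then show ?thesis by (simp add: field_simps)
qed


theorem proposition4p3:
  fixes W :: "((real^'n::{finite,linorder}) \<times> (real^'m::finite)) set"
    and s :: nat
    and A0 :: "'n::{finite,linorder} list \<Rightarrow> 'm::finite \<Rightarrow> (real^'n::{finite,linorder}) \<times> (real^'m) \<times> (real^'n::{finite,linorder}^'m) \<Rightarrow> real"
    and A1 :: "'n::{finite,linorder} list \<Rightarrow> 'n::{finite,linorder} \<Rightarrow> 'm::finite \<Rightarrow> (real^'n::{finite,linorder}) \<times> (real^'m) \<times> (real^'n::{finite,linorder}^'m) \<Rightarrow> real"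
  assumes W_open: "open W"
    and s_lt: "s < CARD('n::{finite,linorder})"
    and A0_smooth: "\<And>I \<sigma>. smooth_fun_on (j1dom W) (A0 I \<sigma>)"
    and A1_smooth: "\<And>I j \<sigma>. smooth_fun_on (j1dom W) (A1 I j \<sigma>)"
    and A0_antisym: "\<And>\<sigma> z. z \<in> j1dom W \<Longrightarrow> antisym_idx s (\<lambda>I. A0 I \<sigma> z)"
    and A1_antisym: "\<And>j \<sigma> z. z \<in> j1dom W \<Longrightarrow> antisym_idx s (\<lambda>I. A1 I j \<sigma> z)"
  shows
    "(\<forall>Xi. vert_field W Xi \<longrightarrow> (\<forall>P\<in>jdom W.
         Vrho s A0 A1 Xi P = (\<lambda>js. Eprime s A0 A1 Xi P js + Div (Suc s) (Tprime_coeff s A1 Xi) P js)))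
     \<and> reduced1 (jdom W) s (\<lambda>I j \<sigma> P. liftA (A1 I j \<sigma>) P - that A1 (I @ [j]) \<sigma> P)
     \<and> (\<forall>(e0 :: 'n::{finite,linorder} list \<Rightarrow> 'm::finite \<Rightarrow> ('n,'m) jpt \<Rightarrow> real)
          (e1 :: 'n::{finite,linorder} list \<Rightarrow> 'n::{finite,linorder} \<Rightarrow> 'm::finite \<Rightarrow> ('n,'m) jpt \<Rightarrow> real)
          (t :: 'n::{finite,linorder} list \<Rightarrow> 'm::finite \<Rightarrow> ('n,'m) jpt \<Rightarrow> real).
          (\<forall>I \<sigma>. \<exists>k. has_order k (e0 I \<sigma>)) \<and>
          (\<forall>I j \<sigma>. \<exists>k. has_order k (e1 I j \<sigma>)) \<and>
          (\<forall>\<sigma>. \<forall>P\<in>jdom W. antisym_idx s (\<lambda>I. e0 I \<sigma> P)) \<and>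
          (\<forall>j \<sigma>. \<forall>P\<in>jdom W. antisym_idx s (\<lambda>I. e1 I j \<sigma> P)) \<and>
          reduced1 (jdom W) s e1 \<and>
          (\<forall>K \<sigma>. \<exists>k. has_order k (t K \<sigma>)) \<and>
          (\<forall>K \<sigma>. pdiff_on (jdom W) (t K \<sigma>)) \<and>
          (\<forall>\<sigma>. \<forall>P\<in>jdom W. antisym_idx (Suc s) (\<lambda>K. t K \<sigma> P)) \<and>
          (\<forall>Xi. vert_field W Xi \<longrightarrow> (\<forall>P\<in>jdom W.
              Vrho s A0 A1 Xi P =
                (\<lambda>js. vm1 s e0 e1 Xi P js + Div (Suc s) (vm0_coeff (Suc s) t Xi) P js)))
        \<longrightarrow> (\<forall>Xi. vert_field W Xi \<longrightarrow> (\<forall>P\<in>jdom W.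
              vm1 s e0 e1 Xi P = Eprime s A0 A1 Xi P \<and>
              vm0 (Suc s) t Xi P = Tprime s A1 Xi P)))"
proof -
  have A1d: "\<And>I j \<sigma> z. z \<in> j1dom W \<Longrightarrow> A1 I j \<sigma> differentiable (at z)"
    using A1_smooth smooth_diff by blast
  have sn: "s \<le> CARD('n)" using s_lt by simp
  have C1: "\<forall>Xi. vert_field W Xi \<longrightarrow> (\<forall>P\<in>jdom W.
         Vrho s A0 A1 Xi P = (\<lambda>js. Eprime s A0 A1 Xi P js + Div (Suc s) (Tprime_coeff s A1 Xi) P js))"
  proof (intro allI impI ballI ext)
    fix Xi P js assume Xi: "vert_field W Xi" and P: "P \<in> jdom W"
    show "Vrho s A0 A1 Xi P js = Eprime s A0 A1 Xi P js + Div (Suc s) (Tprime_coeff s A1 Xi) P js"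
      by (rule existence[OF P A1d Xi])
  qed
  have C2: "reduced1 (jdom W) s (\<lambda>I j \<sigma> P. liftA (A1 I j \<sigma>) P - that A1 (I @ [j]) \<sigma> P)"
    by (rule reduced_part)
  have C3: "(\<forall>I \<sigma>. \<exists>k. has_order k (e0 I \<sigma>)) \<and>
          (\<forall>I j \<sigma>. \<exists>k. has_order k (e1 I j \<sigma>)) \<and>
          (\<forall>\<sigma>. \<forall>P\<in>jdom W. antisym_idx s (\<lambda>I. e0 I \<sigma> P)) \<and>
          (\<forall>j \<sigma>. \<forall>P\<in>jdom W. antisym_idx s (\<lambda>I. e1 I j \<sigma> P)) \<and>
          reduced1 (jdom W) s e1 \<and>
          (\<forall>K \<sigma>. \<exists>k. has_order k (t K \<sigma>)) \<and>
          (\<forall>K \<sigma>. pdiff_on (jdom W) (t K \<sigma>)) \<and>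
          (\<forall>\<sigma>. \<forall>P\<in>jdom W. antisym_idx (Suc s) (\<lambda>K. t K \<sigma> P)) \<and>
          (\<forall>Xi. vert_field W Xi \<longrightarrow> (\<forall>P\<in>jdom W.
              Vrho s A0 A1 Xi P =
                (\<lambda>js. vm1 s e0 e1 Xi P js + Div (Suc s) (vm0_coeff (Suc s) t Xi) P js)))
        \<longrightarrow> (\<forall>Xi. vert_field W Xi \<longrightarrow> (\<forall>P\<in>jdom W.
              vm1 s e0 e1 Xi P = Eprime s A0 A1 Xi P \<and>
              vm0 (Suc s) t Xi P = Tprime s A1 Xi P))"
    for e0 :: "'n::{finite,linorder} list \<Rightarrow> 'm::finite \<Rightarrow> ('n,'m) jpt \<Rightarrow> real"
      and e1 :: "'n::{finite,linorder} list \<Rightarrow> 'n::{finite,linorder} \<Rightarrow> 'm::finite \<Rightarrow> ('n,'m) jpt \<Rightarrow> real"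
      and t :: "'n::{finite,linorder} list \<Rightarrow> 'm::finite \<Rightarrow> ('n,'m) jpt \<Rightarrow> real"
  proof (intro impI allI ballI)
    assume hyp: "(\<forall>I \<sigma>. \<exists>k. has_order k (e0 I \<sigma>)) \<and>
          (\<forall>I j \<sigma>. \<exists>k. has_order k (e1 I j \<sigma>)) \<and>
          (\<forall>\<sigma>. \<forall>P\<in>jdom W. antisym_idx s (\<lambda>I. e0 I \<sigma> P)) \<and>
          (\<forall>j \<sigma>. \<forall>P\<in>jdom W. antisym_idx s (\<lambda>I. e1 I j \<sigma> P)) \<and>
          reduced1 (jdom W) s e1 \<and>
          (\<forall>K \<sigma>. \<exists>k. has_order k (t K \<sigma>)) \<and>
          (\<forall>K \<sigma>. pdiff_on (jdom W) (t K \<sigma>)) \<and>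
          (\<forall>\<sigma>. \<forall>P\<in>jdom W. antisym_idx (Suc s) (\<lambda>K. t K \<sigma> P)) \<and>
          (\<forall>Xi. vert_field W Xi \<longrightarrow> (\<forall>P\<in>jdom W.
              Vrho s A0 A1 Xi P =
                (\<lambda>js. vm1 s e0 e1 Xi P js + Div (Suc s) (vm0_coeff (Suc s) t Xi) P js)))"
    then have e1anti: "\<forall>j \<sigma>. \<forall>P\<in>jdom W. antisym_idx s (\<lambda>I. e1 I j \<sigma> P)"
      and red: "reduced1 (jdom W) s e1"
      and tfo: "\<forall>K \<sigma>. \<exists>k. has_order k (t K \<sigma>)"
      and tpd: "\<forall>K \<sigma>. pdiff_on (jdom W) (t K \<sigma>)"
      and tanti: "\<forall>\<sigma>. \<forall>P\<in>jdom W. antisym_idx (Suc s) (\<lambda>K. t K \<sigma> P)"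
      and H: "\<forall>Xi. vert_field W Xi \<longrightarrow> (\<forall>P\<in>jdom W.
              Vrho s A0 A1 Xi P =
                (\<lambda>js. vm1 s e0 e1 Xi P js + Div (Suc s) (vm0_coeff (Suc s) t Xi) P js))"
      by blast+
    have U: "t K \<sigma> Q = fact s * that A1 K \<sigma> Q" if "Q \<in> jdom W" "length K = Suc s" for K \<sigma> Q
      by (rule uniq_step2[OF sn A1_antisym e1anti tfo tpd tanti H red that])
    fix Xi P assume Xi: "vert_field W Xi" and P: "P \<in> jdom W"
    have ceq: "vm0_coeff (Suc s) t Xi K Q = Tprime_coeff s A1 Xi K Q" if "Q \<in> jdom W" "length K = Suc s" for K Q
    proof -
      have f: "1 / fact (Suc s) * fact s = (1 / (of_nat s + 1) :: real)"
      proof -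
        have fs: "(fact s :: real) > 0" by simp
        have "fact (Suc s) = (of_nat (Suc s) * fact s :: real)" by (rule fact_Suc)
        then have "1 / fact (Suc s) * fact s = fact s / (of_nat (Suc s) * fact s :: real)" by simp
        also have "\<dots> = 1 / of_nat (Suc s)" using fs by simp
        finally show ?thesis by simp
      qed
      have "vm0_coeff (Suc s) t Xi K Q = 1 / fact (Suc s) * (\<Sum>\<sigma>\<in>UNIV. fact s * that A1 K \<sigma> Q * Xi0 Xi \<sigma> Q)"
        unfolding vm0_coeff_def using U[OF that] by simp
      also have "\<dots> = (1 / fact (Suc s) * fact s) * (\<Sum>\<sigma>\<in>UNIV. that A1 K \<sigma> Q * Xi0 Xi \<sigma> Q)"
        by (simp add: sum_distrib_left mult.assoc)
      also have "\<dots> = Tprime_coeff s A1 Xi K Q" unfolding f Tprime_coeff_def ..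
      finally show ?thesis .
    qed
    have fo_v: "fo (vm0_coeff (Suc s) t Xi K)" for K
    proof -
      have "fo (t K \<sigma>)" for \<sigma> using tfo unfolding fo_def by blast
      then show ?thesis unfolding vm0_coeff_def
        by (intro fo_cmult fo_sum_fin fo_mult fo_Xi0) auto
    qed
    have fo_T: "fo (Tprime_coeff s A1 Xi K)" for K
      unfolding Tprime_coeff_def by (intro fo_cmult fo_sum_fin fo_mult fo_Xi0 fo_that) auto
    have Deq: "Div (Suc s) (vm0_coeff (Suc s) t Xi) P js = Div (Suc s) (Tprime_coeff s A1 Xi) P js" for js
      unfolding Div_def
    proof (intro sum.cong refl)
      fix K l assume K: "K \<in> {K :: 'n list. length K = Suc s}"
      show "fd l (vm0_coeff (Suc s) t Xi K) P * wedge_dx l (ds_idx K) js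
          = fd l (Tprime_coeff s A1 Xi K) P * wedge_dx l (ds_idx K) js"
        using fd_local[OF W_open P fo_v fo_T, of K K l] ceq K by simp
    qed
    have V1: "Vrho s A0 A1 Xi P = (\<lambda>js. vm1 s e0 e1 Xi P js + Div (Suc s) (vm0_coeff (Suc s) t Xi) P js)"
      using H Xi P by blast
    have V2: "Vrho s A0 A1 Xi P = (\<lambda>js. Eprime s A0 A1 Xi P js + Div (Suc s) (Tprime_coeff s A1 Xi) P js)"
      using C1 Xi P by blast
    show "vm1 s e0 e1 Xi P = Eprime s A0 A1 Xi P \<and> vm0 (Suc s) t Xi P = Tprime s A1 Xi P"
    proof
      show "vm1 s e0 e1 Xi P = Eprime s A0 A1 Xi P"
      proof
        fix js
        have "vm1 s e0 e1 Xi P js + Div (Suc s) (vm0_coeff (Suc s) t Xi) P js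
            = Eprime s A0 A1 Xi P js + Div (Suc s) (Tprime_coeff s A1 Xi) P js"
          using fun_cong[OF V1, of js] fun_cong[OF V2, of js] by simp
        then show "vm1 s e0 e1 Xi P js = Eprime s A0 A1 Xi P js" using Deq[of js] by simp
      qed
      show "vm0 (Suc s) t Xi P = Tprime s A1 Xi P"
        unfolding vm0_def Tprime_def hform_def
      proof (rule ext, rule sum.cong[OF refl])
        fix js K assume "K \<in> {I :: 'n list. length I = Suc s}"
        then show "vm0_coeff (Suc s) t Xi K P * ds_idx K js = Tprime_coeff s A1 Xi K P * ds_idx K js"
          using ceq P by simp
      qed
    qed
  qed
  show ?thesis using C1 C2 C3 by blast
qed



end
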